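(* (a) (Cochain version) Let $A=(P(V),d_A)$ be a 1-connected minimal quasi-free cochain $P$-algebra and let $B$ be a cochain $P$-algebra whose cohomology is concentrated in degrees $\leq n$. Then every cochain $P$-algebra map $f_{n-1}\colon A_{n-1}\to B$ extends to a cochain $P$-algebra map $f_n\colon A_n\to B$. (b) (Chain version) Let $A=(P(V),d_A)$ be a 1-connected minimal quasi-free chain $P$-algebra and let $B$ be a chain $P$-algebra whose homology is concentrated in degrees $\leq n$. Then every chain $P$-algebra map $f_{n+1}\colon A_{n+1}\to B$ extends to a chain $P$-algebra map $f_{n+2}\colon A_{n+2}\to B$.
   Context: Fix a field $k$ of characteristic zero and an operad $P$ in $k$-vector spaces (viewed in degree $0$) with $P(1)=k$ and either $P(0)=k$ or $P(0)=0$. Cochain algebras have differential of degree $+1$, chain algebras of degree $-1$; the degree-$m$ part of $C$ is written $C^m$. A cochain $P$-algebra is 1-connected if concentrated in non-negative degrees with $A^0=P(0)$ and $A^1=0$; a chain $P$-algebra is 1-connected if concentrated in non-negative homological degrees with $A^0=P(0)$. Quasi-free means the underlying graded $P$-algebra is free $P(V)=\bigoplus_iP(i)\otimes_{k[\Sigma_i]}V^{\otimes i}$. A 1-connected quasi-free $(P(V),d)$ is minimal if $d(V)\subset\bigoplus_{i\geq2}P(i)\otimes_{k[\Sigma_i]}V^{\otimes i}$. $A_m$ denotes the subalgebra $(P(V^{\leq m}),d|_{P(V^{\leq m})})$. *)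

theory Defs
  imports Main "HOL.Vector_Spaces" "HOL-Combinatorics.Permutations"
begin

definition lin_subspace :: "('k \<Rightarrow> 'v \<Rightarrow> 'v) \<Rightarrow> 'v::ab_group_add set \<Rightarrow> bool" where
  "lin_subspace sc S \<longleftrightarrow> 0 \<in> S \<and> (\<forall>x\<in>S. \<forall>y\<in>S. x + y \<in> S) \<and> (\<forall>c. \<forall>x\<in>S. sc c x \<in> S)"

definition lspan :: "('k \<Rightarrow> 'v \<Rightarrow> 'v) \<Rightarrow> 'v::ab_group_add set \<Rightarrow> 'v set" where
  "lspan sc S = {x. \<exists>cs ys. set ys \<subseteq> S \<and> length cs = length ys \<and>
                      x = (\<Sum>i<length ys. sc (cs ! i) (ys ! i))}"

definition ksign :: "int \<Rightarrow> 'k::field" where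
  "ksign i = (if even i then 1 else -1)"

definition plist :: "(nat \<Rightarrow> nat) \<Rightarrow> 'x list \<Rightarrow> 'x list" where
  "plist r xs = map (\<lambda>i. xs ! r i) [0..<length xs]"

definition offs :: "nat list \<Rightarrow> nat \<Rightarrow> nat" where
  "offs ks j = sum_list (take j ks)"

definition blk :: "nat list \<Rightarrow> nat \<Rightarrow> nat" where
  "blk ks p = (LEAST b. p < offs ks (Suc b))"

text \<open>Block permutation induced by r on blocks of sizes ks.\<close>
definition blk_perm :: "nat list \<Rightarrow> (nat \<Rightarrow> nat) \<Rightarrow> nat \<Rightarrow> nat" where
  "blk_perm ks r p = (let ks' = plist r ks; b = blk ks' p in offs ks (r b) + (p - offs ks' b))"

text \<open>Block sum of permutations ts, the i-th acting on the i-th block of size ks!i.\<close>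
definition sum_perm :: "nat list \<Rightarrow> (nat \<Rightarrow> nat) list \<Rightarrow> nat \<Rightarrow> nat" where
  "sum_perm ks ts p = (let b = blk ks p in offs ks b + (ts ! b) (p - offs ks b))"

text \<open>Koszul sign of reordering elements of degrees ds into the order ds!(r 0), ds!(r 1), ...\<close>
definition koszul :: "(nat \<Rightarrow> nat) \<Rightarrow> int list \<Rightarrow> 'k::field" where
  "koszul r ds = ksign (\<Sum>a<length ds. \<Sum>b<length ds.
       if a < b \<and> r b < r a then ds ! (r a) * ds ! (r b) else 0)"

section \<open>Operads in k-vector spaces (concentrated in degree 0)\<close>

text \<open>Operations of arity n form the subspace Pa n of the vector space 'o.
  operm mu r is the operation (x_0,...,x_{n-1}) |-> mu(x_{r 0},...,x_{r (n-1)}).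
  ocomp mu [nu_1..nu_n] is the full composition mu(nu_1,...,nu_n).\<close>
record ('k, 'o) operad =
  Pa :: "nat \<Rightarrow> 'o set"
  osc :: "'k \<Rightarrow> 'o \<Rightarrow> 'o"
  ocomp :: "'o \<Rightarrow> 'o list \<Rightarrow> 'o"
  operm :: "'o \<Rightarrow> (nat \<Rightarrow> nat) \<Rightarrow> 'o"
  ounit :: 'o

definition is_operad :: "('k::field, 'o::ab_group_add) operad \<Rightarrow> bool" where
  "is_operad P \<longleftrightarrow>
     vector_space (osc P) \<and>
     (\<forall>n. lin_subspace (osc P) (Pa P n)) \<and>
     ounit P \<in> Pa P 1 \<and>
     \<comment> \<open>composition lands in the right arity\<close>
     (\<forall>n mu nus ks. mu \<in> Pa P n \<and> length nus = n \<and> length ks = n \<and>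
        (\<forall>i<n. nus ! i \<in> Pa P (ks ! i)) \<longrightarrow> ocomp P mu nus \<in> Pa P (sum_list ks)) \<and>
     \<comment> \<open>multilinearity of composition\<close>
     (\<forall>n mu mu' nus c. mu \<in> Pa P n \<and> mu' \<in> Pa P n \<and> length nus = n \<and>
        (\<forall>nu\<in>set nus. \<exists>k. nu \<in> Pa P k) \<longrightarrow>
        ocomp P (mu + mu') nus = ocomp P mu nus + ocomp P mu' nus \<and>
        ocomp P (osc P c mu) nus = osc P c (ocomp P mu nus)) \<and>
     (\<forall>n mu nus i k nu nu' c. mu \<in> Pa P n \<and> length nus = n \<and>
        (\<forall>nu\<in>set nus. \<exists>k. nu \<in> Pa P k) \<and> i < n \<and> nu \<in> Pa P k \<and> nu' \<in> Pa P k \<longrightarrow>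
        ocomp P mu (nus[i := nu + nu']) = ocomp P mu (nus[i := nu]) + ocomp P mu (nus[i := nu']) \<and>
        ocomp P mu (nus[i := osc P c nu]) = osc P c (ocomp P mu (nus[i := nu]))) \<and>
     \<comment> \<open>unit laws\<close>
     (\<forall>n mu. mu \<in> Pa P n \<longrightarrow>
        ocomp P (ounit P) [mu] = mu \<and> ocomp P mu (replicate n (ounit P)) = mu) \<and>
     \<comment> \<open>associativity\<close>
     (\<forall>n mu nus rss. mu \<in> Pa P n \<and> length nus = n \<and> length rss = n \<and>
        (\<forall>i<n. nus ! i \<in> Pa P (length (rss ! i))) \<and>
        (\<forall>r\<in>set (concat rss). \<exists>k. r \<in> Pa P k) \<longrightarrow>
        ocomp P (ocomp P mu nus) (concat rss) = ocomp P mu (map (\<lambda>i. ocomp P (nus ! i) (rss ! i)) [0..<n])) \<and>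
     \<comment> \<open>symmetric group actions\<close>
     (\<forall>n mu mu' r r' c. mu \<in> Pa P n \<and> mu' \<in> Pa P n \<and> r permutes {..<n} \<and> r' permutes {..<n} \<longrightarrow>
        operm P mu r \<in> Pa P n \<and> operm P mu id = mu \<and>
        operm P (operm P mu r) r' = operm P mu (r' \<circ> r) \<and>
        operm P (mu + mu') r = operm P mu r + operm P mu' r \<and>
        operm P (osc P c mu) r = osc P c (operm P mu r)) \<and>
     \<comment> \<open>equivariance of composition\<close>
     (\<forall>n mu nus ks r. mu \<in> Pa P n \<and> length nus = n \<and> length ks = n \<and>
        (\<forall>i<n. nus ! i \<in> Pa P (ks ! i)) \<and> r permutes {..<n} \<longrightarrow>
        ocomp P (operm P mu r) nus = operm P (ocomp P mu (plist r nus)) (blk_perm ks r)) \<and>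
     (\<forall>n mu nus ks ts. mu \<in> Pa P n \<and> length nus = n \<and> length ks = n \<and> length ts = n \<and>
        (\<forall>i<n. nus ! i \<in> Pa P (ks ! i) \<and> (ts ! i) permutes {..<ks ! i}) \<longrightarrow>
        ocomp P mu (map (\<lambda>i. operm P (nus ! i) (ts ! i)) [0..<n]) = operm P (ocomp P mu nus) (sum_perm ks ts))"

text \<open>Standing assumptions: P(1) = k and (P(0) = k or P(0) = 0).\<close>
definition std_operad :: "('k::field, 'o::ab_group_add) operad \<Rightarrow> bool" where
  "std_operad P \<longleftrightarrow> is_operad P \<and>
     ounit P \<noteq> 0 \<and> Pa P 1 = range (\<lambda>c. osc P c (ounit P)) \<and>
     (Pa P 0 = {0} \<or> (\<exists>u. u \<noteq> 0 \<and> Pa P 0 = range (\<lambda>c. osc P c u)))"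

section \<open>Differential graded P-algebras\<close>

text \<open>A graded vector space is a family Car m (m :: int) of subspaces of 'a with
  pairwise trivial intersections; all structure is given on homogeneous elements.
  The differential has degree e (e = 1: cochain, e = -1: chain, Car m = C_m).\<close>
record ('k, 'a, 'o) dgpalg =
  Car :: "int \<Rightarrow> 'a set"
  asc :: "'k \<Rightarrow> 'a \<Rightarrow> 'a"
  act :: "'o \<Rightarrow> 'a list \<Rightarrow> 'a"
  dif :: "'a \<Rightarrow> 'a"

definition homog :: "(int \<Rightarrow> 'a set) \<Rightarrow> int list \<Rightarrow> 'a list \<Rightarrow> bool" where
  "homog C ds xs \<longleftrightarrow> length ds = length xs \<and> (\<forall>i<length xs. xs ! i \<in> C (ds ! i))"

definition is_palg :: "('k::field, 'o::ab_group_add) operad \<Rightarrow> ('k, 'a::ab_group_add, 'o) dgpalg \<Rightarrow> bool" where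
  "is_palg P A \<longleftrightarrow>
     vector_space (asc A) \<and>
     (\<forall>m. lin_subspace (asc A) (Car A m)) \<and>
     (\<forall>m m'. m \<noteq> m' \<longrightarrow> Car A m \<inter> Car A m' \<subseteq> {0}) \<and>
     (\<forall>n mu ds xs. mu \<in> Pa P n \<and> length xs = n \<and> homog (Car A) ds xs \<longrightarrow>
        act A mu xs \<in> Car A (sum_list ds)) \<and>
     (\<forall>n mu mu' ds xs c. mu \<in> Pa P n \<and> mu' \<in> Pa P n \<and> length xs = n \<and> homog (Car A) ds xs \<longrightarrow>
        act A (mu + mu') xs = act A mu xs + act A mu' xs \<and>
        act A (osc P c mu) xs = asc A c (act A mu xs)) \<and>
     (\<forall>n mu ds xs i x y c. mu \<in> Pa P n \<and> length xs = n \<and> homog (Car A) ds xs \<and> i < n \<and>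
        x \<in> Car A (ds ! i) \<and> y \<in> Car A (ds ! i) \<longrightarrow>
        act A mu (xs[i := x + y]) = act A mu (xs[i := x]) + act A mu (xs[i := y]) \<and>
        act A mu (xs[i := asc A c x]) = asc A c (act A mu (xs[i := x]))) \<and>
     (\<forall>d x. x \<in> Car A d \<longrightarrow> act A (ounit P) [x] = x) \<and>
     (\<forall>n mu nus xss. mu \<in> Pa P n \<and> length nus = n \<and> length xss = n \<and>
        (\<forall>i<n. nus ! i \<in> Pa P (length (xss ! i)) \<and> (\<exists>ds. homog (Car A) ds (xss ! i))) \<longrightarrow>
        act A (ocomp P mu nus) (concat xss) = act A mu (map (\<lambda>i. act A (nus ! i) (xss ! i)) [0..<n])) \<and>
     (\<forall>n mu ds xs r. mu \<in> Pa P n \<and> length xs = n \<and> homog (Car A) ds xs \<and> r permutes {..<n} \<longrightarrow>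
        act A (operm P mu r) xs = asc A (koszul r ds) (act A mu (plist r xs)))"

definition is_dgpalg :: "('k::field, 'o::ab_group_add) operad \<Rightarrow> int \<Rightarrow> ('k, 'a::ab_group_add, 'o) dgpalg \<Rightarrow> bool" where
  "is_dgpalg P e A \<longleftrightarrow> is_palg P A \<and>
     (\<forall>m x y c. x \<in> Car A m \<and> y \<in> Car A m \<longrightarrow>
        dif A x \<in> Car A (m + e) \<and> dif A (x + y) = dif A x + dif A y \<and>
        dif A (asc A c x) = asc A c (dif A x) \<and> dif A (dif A x) = 0) \<and>
     (\<forall>n mu ds xs. mu \<in> Pa P n \<and> length xs = n \<and> homog (Car A) ds xs \<longrightarrow>
        dif A (act A mu xs) =
          (\<Sum>i<n. asc A (ksign (e * sum_list (take i ds))) (act A mu (xs[i := dif A (xs ! i)]))))"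

definition cochain_palg where "cochain_palg P A \<longleftrightarrow> is_dgpalg P 1 A"
definition chain_palg where "chain_palg P A \<longleftrightarrow> is_dgpalg P (-1) A"

text \<open>Morphisms of dg P-algebras (from the possibly sub-carrier Car A).\<close>
definition dg_hom :: "('k::field, 'o::ab_group_add) operad \<Rightarrow> ('k, 'a::ab_group_add, 'o) dgpalg
     \<Rightarrow> ('k, 'b::ab_group_add, 'o) dgpalg \<Rightarrow> ('a \<Rightarrow> 'b) \<Rightarrow> bool" where
  "dg_hom P A B f \<longleftrightarrow>
     (\<forall>m x y c. x \<in> Car A m \<and> y \<in> Car A m \<longrightarrow>
        f x \<in> Car B m \<and> f (x + y) = f x + f y \<and> f (asc A c x) = asc B c (f x) \<and>
        f (dif A x) = dif B (f x)) \<and>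
     (\<forall>n mu ds xs. mu \<in> Pa P n \<and> length xs = n \<and> homog (Car A) ds xs \<longrightarrow>
        f (act A mu xs) = act B mu (map f xs))"

section \<open>Quasi-free, minimal, 1-connected; the subalgebras A_m\<close>

definition gen_car :: "('k, 'o) operad \<Rightarrow> ('k, 'a::ab_group_add, 'o) dgpalg \<Rightarrow> (int \<Rightarrow> 'a set)
     \<Rightarrow> int \<Rightarrow> int \<Rightarrow> 'a set" where
  "gen_car P A V m j = lspan (asc A) {act A mu xs | mu n ds xs.
      mu \<in> Pa P n \<and> length xs = n \<and> homog V ds xs \<and> (\<forall>d\<in>set ds. d \<le> m) \<and> sum_list ds = j}"

text \<open>A_m = (P(V^{\<le>m}), d restricted).\<close>
definition subalg :: "('k, 'o) operad \<Rightarrow> ('k, 'a::ab_group_add, 'o) dgpalg \<Rightarrow> (int \<Rightarrow> 'a set)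
     \<Rightarrow> int \<Rightarrow> ('k, 'a, 'o) dgpalg" where
  "subalg P A V m = A\<lparr>Car := gen_car P A V m\<rparr>"

text \<open>Generators of the free graded P-algebra P(V): an operation of arity n with n
  degree-tagged elements of V; formal linear combinations are finitely supported
  functions into k. rels are the relations defining
  P(V) = sum_n P(n) (x)_{Sigma_n} V^{(x)n} (multilinearity and Sigma_n-coinvariance
  with Koszul signs).\<close>
definition free_gens :: "('k, 'o) operad \<Rightarrow> (int \<Rightarrow> 'a set) \<Rightarrow> ('o \<times> (int \<times> 'a) list) set" where
  "free_gens P V = {(mu, dxs) | mu n dxs. mu \<in> Pa P n \<and> length dxs = n \<and> (\<forall>(d, x)\<in>set dxs. x \<in> V d)}"

definition dlt :: "'g \<Rightarrow> 'g \<Rightarrow> 'k::field" where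
  "dlt g h = (if h = g then 1 else 0)"

definition free_rels :: "('k::field, 'o::ab_group_add) operad \<Rightarrow> ('k, 'a::ab_group_add, 'o) dgpalg
     \<Rightarrow> (int \<Rightarrow> 'a set) \<Rightarrow> (('o \<times> (int \<times> 'a) list) \<Rightarrow> 'k) set" where
  "free_rels P A V =
     {(\<lambda>h. dlt (mu + mu', dxs) h - dlt (mu, dxs) h - dlt (mu', dxs) h) | mu mu' dxs.
         (mu, dxs) \<in> free_gens P V \<and> (mu', dxs) \<in> free_gens P V} \<union>
     {(\<lambda>h. dlt (osc P c mu, dxs) h - c * dlt (mu, dxs) h) | mu c dxs. (mu, dxs) \<in> free_gens P V} \<union>
     {(\<lambda>h. dlt (mu, dxs[i := (d, x + y)]) h - dlt (mu, dxs[i := (d, x)]) h - dlt (mu, dxs[i := (d, y)]) h)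
        | mu dxs i d x y. (mu, dxs) \<in> free_gens P V \<and> i < length dxs \<and> x \<in> V d \<and> y \<in> V d} \<union>
     {(\<lambda>h. dlt (mu, dxs[i := (d, asc A c x)]) h - c * dlt (mu, dxs[i := (d, x)]) h)
        | mu dxs i d x c. (mu, dxs) \<in> free_gens P V \<and> i < length dxs \<and> x \<in> V d} \<union>
     {(\<lambda>h. dlt (operm P mu r, dxs) h - koszul r (map fst dxs) * dlt (mu, plist r dxs) h)
        | mu dxs r. (mu, dxs) \<in> free_gens P V \<and> r permutes {..<length dxs}}"

inductive_set rspan :: "('g \<Rightarrow> 'k::field) set \<Rightarrow> ('g \<Rightarrow> 'k) set" for R where
  rspan_zero: "(\<lambda>_. 0) \<in> rspan R"
| rspan_step: "r \<in> R \<Longrightarrow> s \<in> rspan R \<Longrightarrow> (\<lambda>g. c * r g + s g) \<in> rspan R"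

text \<open>The underlying graded P-algebra of A is free on the graded subspace V, i.e. the
  canonical map P(V) \<rightarrow> A is bijective in each degree: surjective (A is spanned
  by the P-operations applied to elements of V) and injective (every homogeneous formal
  combination evaluating to 0 lies in the span of the defining relations of P(V)).\<close>
definition quasi_free :: "('k::field, 'o::ab_group_add) operad \<Rightarrow> ('k, 'a::ab_group_add, 'o) dgpalg
     \<Rightarrow> (int \<Rightarrow> 'a set) \<Rightarrow> bool" where
  "quasi_free P A V \<longleftrightarrow>
     (\<forall>d. lin_subspace (asc A) (V d) \<and> V d \<subseteq> Car A d) \<and>
     (\<forall>j. Car A j = lspan (asc A) {act A mu xs | mu n ds xs.
            mu \<in> Pa P n \<and> length xs = n \<and> homog V ds xs \<and> sum_list ds = j}) \<and>
     (\<forall>j (s :: ('o \<times> (int \<times> 'a) list) \<Rightarrow> 'k).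
        finite {g. s g \<noteq> 0} \<and>
        (\<forall>g. s g \<noteq> 0 \<longrightarrow> g \<in> free_gens P V \<and> sum_list (map fst (snd g)) = j) \<and>
        (\<Sum>g\<in>{g. s g \<noteq> 0}. asc A (s g) (act A (fst g) (map snd (snd g)))) = 0
        \<longrightarrow> s \<in> rspan (free_rels P A V))"

text \<open>Minimality: d(V) lies in the image of sum_{i\<ge>2} P(i) (x)_{Sigma_i} V^{(x)i}.
  e is the degree of the differential.\<close>
definition minimal :: "('k::field, 'o::ab_group_add) operad \<Rightarrow> int \<Rightarrow> ('k, 'a::ab_group_add, 'o) dgpalg
     \<Rightarrow> (int \<Rightarrow> 'a set) \<Rightarrow> bool" where
  "minimal P e A V \<longleftrightarrow>
     (\<forall>d. \<forall>v\<in>V d. dif A v \<in> lspan (asc A) {act A mu xs | mu n ds xs.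
         2 \<le> n \<and> mu \<in> Pa P n \<and> length xs = n \<and> homog V ds xs \<and> sum_list ds = d + e})"

text \<open>A^0 = P(0): the unit map P(0) \<rightarrow> A^0, mu \<mapsto> mu(), is bijective.\<close>
definition deg0_is_P0 :: "('k::field, 'o::ab_group_add) operad \<Rightarrow> ('k, 'a::ab_group_add, 'o) dgpalg \<Rightarrow> bool" where
  "deg0_is_P0 P A \<longleftrightarrow> Car A 0 = {act A mu [] | mu. mu \<in> Pa P 0} \<and>
     (\<forall>mu\<in>Pa P 0. act A mu [] = 0 \<longrightarrow> mu = 0)"

definition one_connected_cochain :: "('k::field, 'o::ab_group_add) operad \<Rightarrow> ('k, 'a::ab_group_add, 'o) dgpalg \<Rightarrow> bool" where
  "one_connected_cochain P A \<longleftrightarrow> (\<forall>m<0. Car A m = {0}) \<and> deg0_is_P0 P A \<and> Car A 1 = {0}"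

definition one_connected_chain :: "('k::field, 'o::ab_group_add) operad \<Rightarrow> ('k, 'a::ab_group_add, 'o) dgpalg \<Rightarrow> bool" where
  "one_connected_chain P A \<longleftrightarrow> (\<forall>m<0. Car A m = {0}) \<and> deg0_is_P0 P A"

text \<open>(Co)homology concentrated in degrees \<le> n: in every degree m > n every
  cycle is a boundary (e = degree of the differential).\<close>
definition homology_le :: "int \<Rightarrow> ('k, 'b::ab_group_add, 'o) dgpalg \<Rightarrow> int \<Rightarrow> bool" where
  "homology_le e B n \<longleftrightarrow> (\<forall>m>n. \<forall>x\<in>Car B m. dif B x = 0 \<longrightarrow> (\<exists>y\<in>Car B (m - e). dif B y = x))"

end

theory Submission imports Defs begin

lemma palg_vs: "is_palg P A \<Longrightarrow> vector_space (asc A)" unfolding is_palg_def by auto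
lemma palg_sub: "is_palg P A \<Longrightarrow> lin_subspace (asc A) (Car A m)" unfolding is_palg_def by auto
lemma palg_disj: "is_palg P A \<Longrightarrow> m \<noteq> m' \<Longrightarrow> x \<in> Car A m \<Longrightarrow> x \<in> Car A m' \<Longrightarrow> x = 0"
  unfolding is_palg_def by auto
lemma palg_act: "is_palg P A \<Longrightarrow> mu \<in> Pa P n \<Longrightarrow> length xs = n \<Longrightarrow> homog (Car A) ds xs \<Longrightarrow>
   act A mu xs \<in> Car A (sum_list ds)"
  unfolding is_palg_def by auto
lemma palg_add_op: "is_palg P A \<Longrightarrow> mu \<in> Pa P n \<Longrightarrow> mu' \<in> Pa P n \<Longrightarrow> length xs = n \<Longrightarrow> homog (Car A) ds xs \<Longrightarrow>
   act A (mu + mu') xs = act A mu xs + act A mu' xs"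
  unfolding is_palg_def by auto
lemma palg_sc_op: "is_palg P A \<Longrightarrow> mu \<in> Pa P n \<Longrightarrow> length xs = n \<Longrightarrow> homog (Car A) ds xs \<Longrightarrow>
   act A (osc P c mu) xs = asc A c (act A mu xs)"
  unfolding is_palg_def by auto
lemma palg_slot_add: "is_palg P A \<Longrightarrow> mu \<in> Pa P n \<Longrightarrow> length xs = n \<Longrightarrow> homog (Car A) ds xs \<Longrightarrow> i < n \<Longrightarrow>
   x \<in> Car A (ds!i) \<Longrightarrow> y \<in> Car A (ds!i) \<Longrightarrow>
   act A mu (xs[i := x + y]) = act A mu (xs[i := x]) + act A mu (xs[i := y])"
  unfolding is_palg_def by auto
lemma palg_slot_sc: "is_palg P A \<Longrightarrow> mu \<in> Pa P n \<Longrightarrow> length xs = n \<Longrightarrow> homog (Car A) ds xs \<Longrightarrow> i < n \<Longrightarrow>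
   x \<in> Car A (ds!i) \<Longrightarrow>
   act A mu (xs[i := asc A c x]) = asc A c (act A mu (xs[i := x]))"
  unfolding is_palg_def by auto
lemma palg_unit: "is_palg P A \<Longrightarrow> x \<in> Car A d \<Longrightarrow> act A (ounit P) [x] = x"
  unfolding is_palg_def by auto
lemma palg_assoc: "is_palg P A \<Longrightarrow> mu \<in> Pa P n \<Longrightarrow> length nus = n \<Longrightarrow> length xss = n \<Longrightarrow>
   (\<forall>i<n. nus ! i \<in> Pa P (length (xss ! i)) \<and> (\<exists>ds. homog (Car A) ds (xss ! i))) \<Longrightarrow>
   act A (ocomp P mu nus) (concat xss) = act A mu (map (\<lambda>i. act A (nus ! i) (xss ! i)) [0..<n])"
  unfolding is_palg_def by auto
lemma palg_perm: "is_palg P A \<Longrightarrow> mu \<in> Pa P n \<Longrightarrow> length xs = n \<Longrightarrow> homog (Car A) ds xs \<Longrightarrow> r permutes {..<n} \<Longrightarrow>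
   act A (operm P mu r) xs = asc A (koszul r ds) (act A mu (plist r xs))"
  unfolding is_palg_def by auto

lemma dg_palg: "is_dgpalg P e A \<Longrightarrow> is_palg P A" unfolding is_dgpalg_def by auto
lemma dg_car: "is_dgpalg P e A \<Longrightarrow> x \<in> Car A m \<Longrightarrow> dif A x \<in> Car A (m + e)"
  unfolding is_dgpalg_def by auto
lemma dg_add: "is_dgpalg P e A \<Longrightarrow> x \<in> Car A m \<Longrightarrow> y \<in> Car A m \<Longrightarrow> dif A (x + y) = dif A x + dif A y"
  unfolding is_dgpalg_def by auto
lemma dg_sc: "is_dgpalg P e A \<Longrightarrow> x \<in> Car A m \<Longrightarrow> dif A (asc A c x) = asc A c (dif A x)"
  unfolding is_dgpalg_def by auto
lemma dg_dd: "is_dgpalg P e A \<Longrightarrow> x \<in> Car A m \<Longrightarrow> dif A (dif A x) = 0"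
  unfolding is_dgpalg_def by auto
lemma dg_leib: "is_dgpalg P e A \<Longrightarrow> mu \<in> Pa P n \<Longrightarrow> length xs = n \<Longrightarrow> homog (Car A) ds xs \<Longrightarrow>
   dif A (act A mu xs) =
     (\<Sum>i<n. asc A (ksign (e * sum_list (take i ds))) (act A mu (xs[i := dif A (xs ! i)])))"
  unfolding is_dgpalg_def by auto

lemma op_sub: "is_operad P \<Longrightarrow> lin_subspace (osc P) (Pa P n)" unfolding is_operad_def by auto
lemma op_unit: "is_operad P \<Longrightarrow> ounit P \<in> Pa P 1" unfolding is_operad_def by auto
lemma op_comp: "is_operad P \<Longrightarrow> mu \<in> Pa P n \<Longrightarrow> length nus = n \<Longrightarrow> length ks = n \<Longrightarrow>
   (\<forall>i<n. nus ! i \<in> Pa P (ks ! i)) \<Longrightarrow> ocomp P mu nus \<in> Pa P (sum_list ks)"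
  unfolding is_operad_def by auto

lemma homog_upd: "homog C ds xs \<Longrightarrow> i < length xs \<Longrightarrow> x \<in> C (ds ! i) \<Longrightarrow> homog C ds (xs[i := x])"
  unfolding homog_def by (auto simp: nth_list_update)
lemma homog_upd2: "homog C ds xs \<Longrightarrow> i < length xs \<Longrightarrow> x \<in> C d \<Longrightarrow> homog C (ds[i := d]) (xs[i := x])"
  unfolding homog_def by (auto simp: nth_list_update)
lemma homog_mono: "homog C ds xs \<Longrightarrow> (\<And>d. C d \<subseteq> C' d) \<Longrightarrow> homog C' ds xs"
  unfolding homog_def by auto
lemma homog_map: "homog C ds xs \<Longrightarrow> (\<And>i. i < length xs \<Longrightarrow> f (xs ! i) \<in> C' (ds ! i)) \<Longrightarrow> homog C' ds (map f xs)"
  unfolding homog_def by auto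

lemma lspan_0: "0 \<in> lspan sc S"
  unfolding lspan_def by (rule CollectI, rule exI[of _ "[]"], rule exI[of _ "[]"]) simp

lemma lspan_step: "y \<in> S \<Longrightarrow> z \<in> lspan sc S \<Longrightarrow> sc c y + z \<in> lspan sc S"
proof -
  assume y: "y \<in> S" and z: "z \<in> lspan sc S"
  then obtain cs ys where h: "set ys \<subseteq> S" "length cs = length ys" "z = (\<Sum>i<length ys. sc (cs ! i) (ys ! i))"
    unfolding lspan_def by auto
  have "sc c y + z = (\<Sum>i<length (y # ys). sc ((c # cs) ! i) ((y # ys) ! i))"
    using h unfolding length_Cons sum.lessThan_Suc_shift by simp
  then show ?thesis unfolding lspan_def using h y
    by (intro CollectI exI[of _ "c # cs"] exI[of _ "y # ys"]) auto
qed

lemma lspan_induct[consumes 1]: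
  assumes x: "x \<in> lspan sc S" and Q0: "Q 0"
    and QS: "\<And>c y z. y \<in> S \<Longrightarrow> z \<in> lspan sc S \<Longrightarrow> Q z \<Longrightarrow> Q (sc c y + z)"
  shows "Q x"
proof -
  obtain cs ys where h: "set ys \<subseteq> S" "length cs = length ys" "x = (\<Sum>i<length ys. sc (cs ! i) (ys ! i))"
    using x unfolding lspan_def by auto
  have "set ys \<subseteq> S \<Longrightarrow> length cs = length ys \<Longrightarrow>
     (\<Sum>i<length ys. sc (cs ! i) (ys ! i)) \<in> lspan sc S \<and> Q (\<Sum>i<length ys. sc (cs ! i) (ys ! i))"
  proof (induction ys arbitrary: cs)
    case Nil then show ?case using Q0 lspan_0[of sc S] by simp
  next
    case (Cons y ys)
    then obtain c cs' where cs: "cs = c # cs'" by (cases cs) auto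
    have e: "(\<Sum>i<length (y # ys). sc (cs ! i) ((y # ys) ! i)) = sc c y + (\<Sum>i<length ys. sc (cs' ! i) (ys ! i))"
      using cs unfolding length_Cons sum.lessThan_Suc_shift by simp
    have IH: "(\<Sum>i<length ys. sc (cs' ! i) (ys ! i)) \<in> lspan sc S \<and> Q (\<Sum>i<length ys. sc (cs' ! i) (ys ! i))"
      using Cons cs by auto
    show ?case unfolding e using IH Cons.prems(1) by (auto intro: QS lspan_step)
  qed
  then show ?thesis using h by auto
qed

lemma lspan_sub: "lin_subspace sc W \<Longrightarrow> S \<subseteq> W \<Longrightarrow> x \<in> lspan sc S \<Longrightarrow> x \<in> W"
  by (erule lspan_induct) (auto simp: lin_subspace_def)

lemma vsm: "vector_space sc \<Longrightarrow> module sc" by (simp add: module_iff_vector_space)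

lemma lspan_base: "vector_space sc \<Longrightarrow> y \<in> S \<Longrightarrow> y \<in> lspan sc S"
  using lspan_step[of y S 0 sc 1] lspan_0[of sc S] by (simp add: module.scale_one[OF vsm])

lemma lspan_add: assumes "vector_space sc" "x \<in> lspan sc S" "z \<in> lspan sc S" shows "x + z \<in> lspan sc S"
  using assms(2) by (induction rule: lspan_induct) (auto simp: add.assoc assms(3) intro: lspan_step)

lemma lspan_sc: assumes "vector_space sc" "x \<in> lspan sc S" shows "sc a x \<in> lspan sc S"
  using assms(2)
proof (induction rule: lspan_induct)
  case 1 show ?case using lspan_0 module.scale_zero_right[OF vsm[OF assms(1)]] by metis
next
  case (2 c y z) then show ?case
    by (simp add: module.scale_right_distrib[OF vsm[OF assms(1)]] module.scale_scale[OF vsm[OF assms(1)]] lspan_step)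
qed

lemma lspan_subspace: "vector_space sc \<Longrightarrow> lin_subspace sc (lspan sc S)"
  unfolding lin_subspace_def using lspan_0 lspan_add lspan_sc by blast


section \<open>Evaluation of formal combinations\<close>

definition EvT :: "('k, 'c, 'o) dgpalg \<Rightarrow> ('a \<Rightarrow> 'c) \<Rightarrow> ('o \<times> (int \<times> 'a) list) \<Rightarrow> 'c" where
  "EvT C hh g = act C (fst g) (map (\<lambda>p. hh (snd p)) (snd g))"

definition Ev :: "('k::field, 'c::ab_group_add, 'o) dgpalg \<Rightarrow> ('a \<Rightarrow> 'c) \<Rightarrow> (('o \<times> (int \<times> 'a) list) \<Rightarrow> 'k) \<Rightarrow> 'c" where
  "Ev C hh s = (\<Sum>g\<in>{g. s g \<noteq> 0}. asc C (s g) (EvT C hh g))"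

lemma Ev_sup: assumes "vector_space (asc C)" "finite S" "{g. s g \<noteq> 0} \<subseteq> S"
  shows "Ev C hh s = (\<Sum>g\<in>S. asc C (s g) (EvT C hh g))"
  unfolding Ev_def by (rule sum.mono_neutral_left) (use assms in \<open>auto simp: module.scale_zero_left[OF vsm[OF assms(1)]]\<close>)

lemma Ev_lin2: assumes vs: "vector_space (asc C)" and f1: "finite {g. sa g \<noteq> 0}" and f2: "finite {g. sb g \<noteq> 0}"
  shows "Ev C hh (\<lambda>g. a * sa g + b * sb g) = asc C a (Ev C hh sa) + asc C b (Ev C hh sb)"
proof -
  let ?S = "{g. sa g \<noteq> 0} \<union> {g. sb g \<noteq> 0}"
  have fS: "finite ?S" using f1 f2 by simp
  have e1: "Ev C hh (\<lambda>g. a * sa g + b * sb g) = (\<Sum>g\<in>?S. asc C (a * sa g + b * sb g) (EvT C hh g))"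
    by (rule Ev_sup[OF vs fS]) auto
  have e2: "Ev C hh sa = (\<Sum>g\<in>?S. asc C (sa g) (EvT C hh g))" by (rule Ev_sup[OF vs fS]) auto
  have e3: "Ev C hh sb = (\<Sum>g\<in>?S. asc C (sb g) (EvT C hh g))" by (rule Ev_sup[OF vs fS]) auto
  show ?thesis unfolding e1 e2 e3
    by (simp add: module.scale_left_distrib[OF vsm[OF vs]] module.scale_scale[OF vsm[OF vs], symmetric]
         module.scale_sum_right[OF vsm[OF vs]] sum.distrib)
qed

lemma fin_lin2: "finite {g. sa g \<noteq> 0} \<Longrightarrow> finite {g. sb g \<noteq> 0} \<Longrightarrow> finite {g. (a::'k::field) * sa g + b * sb g \<noteq> 0}"
  by (rule finite_subset[of _ "{g. sa g \<noteq> 0} \<union> {g. sb g \<noteq> 0}"]) auto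

lemma fin_dlt: "finite {g. (dlt a g :: 'k::field) \<noteq> 0}"
  by (rule finite_subset[of _ "{a}"]) (auto simp: dlt_def)

lemma Ev_dlt: assumes vs: "vector_space (asc C)" shows "Ev C hh (dlt a) = EvT C hh a"
proof -
  have "Ev C hh (dlt a) = (\<Sum>g\<in>{a}. asc C (dlt a g) (EvT C hh g))"
    by (rule Ev_sup[OF vs]) (auto simp: dlt_def)
  then show ?thesis by (simp add: dlt_def module.scale_one[OF vsm[OF vs]])
qed

lemma sum_dlt: assumes vs: "vector_space (asc C)" and fS: "finite S" and aS: "a \<in> S"
  shows "(\<Sum>g\<in>S. asc C (dlt a g) (T g)) = T a"
proof -
  have "\<And>g. asc C (dlt a g) (T g) = (if g = a then T g else 0)"
    by (simp add: dlt_def module.scale_one[OF vsm[OF vs]] module.scale_zero_left[OF vsm[OF vs]])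
  then show ?thesis using fS aS by (simp add: sum.delta')
qed

lemma fin3: "finite {g. (dlt a g - dlt b g - dlt c g :: 'k::field) \<noteq> 0}"
  by (rule finite_subset[of _ "{a, b, c}"]) (auto simp: dlt_def)

lemma fin2: "finite {g. (dlt a g - k * dlt b g :: 'k::field) \<noteq> 0}"
  by (rule finite_subset[of _ "{a, b}"]) (auto simp: dlt_def)

lemma Ev_dlt3: assumes vs: "vector_space (asc C)"
  shows "Ev C hh (\<lambda>g. dlt a g - dlt b g - dlt c g) = EvT C hh a - EvT C hh b - EvT C hh c"
proof -
  have "Ev C hh (\<lambda>g. dlt a g - dlt b g - dlt c g) = (\<Sum>g\<in>{a,b,c}. asc C (dlt a g - dlt b g - dlt c g) (EvT C hh g))"
    by (rule Ev_sup[OF vs]) (auto simp: dlt_def)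
  also have "\<dots> = (\<Sum>g\<in>{a,b,c}. asc C (dlt a g) (EvT C hh g)) - (\<Sum>g\<in>{a,b,c}. asc C (dlt b g) (EvT C hh g))
       - (\<Sum>g\<in>{a,b,c}. asc C (dlt c g) (EvT C hh g))"
    by (simp add: module.scale_left_diff_distrib[OF vsm[OF vs]] sum_subtractf)
  also have "\<dots> = EvT C hh a - EvT C hh b - EvT C hh c"
    by (simp add: sum_dlt[OF vs])
  finally show ?thesis .
qed

lemma Ev_dlt2: assumes vs: "vector_space (asc C)"
  shows "Ev C hh (\<lambda>g. dlt a g - k * dlt b g) = EvT C hh a - asc C k (EvT C hh b)"
proof -
  have "Ev C hh (\<lambda>g. dlt a g - k * dlt b g) = (\<Sum>g\<in>{a,b}. asc C (dlt a g - k * dlt b g) (EvT C hh g))"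
    by (rule Ev_sup[OF vs]) (auto simp: dlt_def)
  also have "\<dots> = (\<Sum>g\<in>{a,b}. asc C (dlt a g) (EvT C hh g)) - asc C k (\<Sum>g\<in>{a,b}. asc C (dlt b g) (EvT C hh g))"
    by (simp add: module.scale_left_diff_distrib[OF vsm[OF vs]] sum_subtractf
        module.scale_sum_right[OF vsm[OF vs]] module.scale_scale[OF vsm[OF vs], symmetric])
  also have "\<dots> = EvT C hh a - asc C k (EvT C hh b)"
    by (simp add: sum_dlt[OF vs])
  finally show ?thesis .
qed

lemma free_gens_iff: "(mu, dxs) \<in> free_gens P V \<longleftrightarrow> mu \<in> Pa P (length dxs) \<and> (\<forall>p\<in>set dxs. snd p \<in> V (fst p))"
  unfolding free_gens_def by auto

lemma plist_map: "r permutes {..<length xs} \<Longrightarrow> map f (plist r xs) = plist r (map f xs)"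
proof -
  assume r: "r permutes {..<length xs}"
  have "\<And>x. x < length xs \<Longrightarrow> r x < length xs" using permutes_in_image[OF r] by auto
  then show ?thesis unfolding plist_def by auto
qed

lemma length_plist[simp]: "length (plist r xs) = length xs" unfolding plist_def by simp

locale evctx =
  fixes P :: "('k::field, 'o::ab_group_add) operad" and A :: "('k, 'a::ab_group_add, 'o) dgpalg"
    and V :: "int \<Rightarrow> 'a set" and C :: "('k, 'c::ab_group_add, 'o) dgpalg" and hh :: "'a \<Rightarrow> 'c"
  assumes C: "is_palg P C"
    and hV: "\<And>d x. x \<in> V d \<Longrightarrow> hh x \<in> Car C d"
    and hadd: "\<And>d x y. x \<in> V d \<Longrightarrow> y \<in> V d \<Longrightarrow> hh (x + y) = hh x + hh y"
    and hsc: "\<And>d c x. x \<in> V d \<Longrightarrow> hh (asc A c x) = asc C c (hh x)"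
begin

lemma vsC: "vector_space (asc C)" using palg_vs[OF C] .

lemma hom_gen: "(mu, dxs) \<in> free_gens P V \<Longrightarrow> homog (Car C) (map fst dxs) (map (\<lambda>p. hh (snd p)) dxs)"
  unfolding homog_def free_gens_iff by (auto intro!: hV)

lemma rel1: "(mu, dxs) \<in> free_gens P V \<Longrightarrow> (mu', dxs) \<in> free_gens P V \<Longrightarrow>
   finite {g. (\<lambda>h. dlt (mu + mu', dxs) h - dlt (mu, dxs) h - dlt (mu', dxs) h) g \<noteq> 0} \<and>
   Ev C hh (\<lambda>h. dlt (mu + mu', dxs) h - dlt (mu, dxs) h - dlt (mu', dxs) h) = 0"
proof -
  assume g: "(mu, dxs) \<in> free_gens P V" and g': "(mu', dxs) \<in> free_gens P V"
  have "act C (mu + mu') (map (\<lambda>p. hh (snd p)) dxs) = act C mu (map (\<lambda>p. hh (snd p)) dxs) + act C mu' (map (\<lambda>p. hh (snd p)) dxs)"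
    by (rule palg_add_op[OF C _ _ _ hom_gen[OF g]]) (use g g' in \<open>auto simp: free_gens_iff\<close>)
  then show ?thesis by (intro conjI fin3) (simp add: Ev_dlt3[OF vsC] EvT_def)
qed

lemma rel2: "(mu, dxs) \<in> free_gens P V \<Longrightarrow>
   finite {g. (\<lambda>h. dlt (osc P c mu, dxs) h - c * dlt (mu, dxs) h) g \<noteq> 0} \<and>
   Ev C hh (\<lambda>h. dlt (osc P c mu, dxs) h - c * dlt (mu, dxs) h) = 0"
proof -
  assume g: "(mu, dxs) \<in> free_gens P V"
  have "act C (osc P c mu) (map (\<lambda>p. hh (snd p)) dxs) = asc C c (act C mu (map (\<lambda>p. hh (snd p)) dxs))"
    by (rule palg_sc_op[OF C _ _ hom_gen[OF g]]) (use g in \<open>auto simp: free_gens_iff\<close>)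
  then show ?thesis by (intro conjI fin2) (simp add: Ev_dlt2[OF vsC] EvT_def)
qed

lemma upd_map: "i < length dxs \<Longrightarrow> map (\<lambda>p. hh (snd p)) (dxs[i := (d, x)]) = (map (\<lambda>p. hh (snd p)) dxs)[i := hh x]"
  by (simp add: map_update)

lemma rel3: "(mu, dxs) \<in> free_gens P V \<Longrightarrow> i < length dxs \<Longrightarrow> x \<in> V d \<Longrightarrow> y \<in> V d \<Longrightarrow>
   finite {g. (\<lambda>h. dlt (mu, dxs[i := (d, x + y)]) h - dlt (mu, dxs[i := (d, x)]) h - dlt (mu, dxs[i := (d, y)]) h) g \<noteq> 0} \<and>
   Ev C hh (\<lambda>h. dlt (mu, dxs[i := (d, x + y)]) h - dlt (mu, dxs[i := (d, x)]) h - dlt (mu, dxs[i := (d, y)]) h) = 0"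
proof -
  assume g: "(mu, dxs) \<in> free_gens P V" and i: "i < length dxs" and x: "x \<in> V d" and y: "y \<in> V d"
  let ?xs = "map (\<lambda>p. hh (snd p)) dxs"
  have H: "homog (Car C) ((map fst dxs)[i := d]) (?xs[i := hh x])"
    using homog_upd2[OF hom_gen[OF g], of i "hh x" d] i hV[OF x] by simp
  have "act C mu ((?xs[i := hh x])[i := hh x + hh y]) = act C mu ((?xs[i := hh x])[i := hh x]) + act C mu ((?xs[i := hh x])[i := hh y])"
    by (rule palg_slot_add[OF C _ _ H]) (use g i hV[OF x] hV[OF y] in \<open>auto simp: free_gens_iff\<close>)
  then show ?thesis using i
    by (intro conjI fin3) (simp add: Ev_dlt3[OF vsC] EvT_def upd_map hadd[OF x y])
qed

lemma rel4: "(mu, dxs) \<in> free_gens P V \<Longrightarrow> i < length dxs \<Longrightarrow> x \<in> V d \<Longrightarrow>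
   finite {g. (\<lambda>h. dlt (mu, dxs[i := (d, asc A c x)]) h - c * dlt (mu, dxs[i := (d, x)]) h) g \<noteq> 0} \<and>
   Ev C hh (\<lambda>h. dlt (mu, dxs[i := (d, asc A c x)]) h - c * dlt (mu, dxs[i := (d, x)]) h) = 0"
proof -
  assume g: "(mu, dxs) \<in> free_gens P V" and i: "i < length dxs" and x: "x \<in> V d"
  let ?xs = "map (\<lambda>p. hh (snd p)) dxs"
  have H: "homog (Car C) ((map fst dxs)[i := d]) (?xs[i := hh x])"
    using homog_upd2[OF hom_gen[OF g], of i "hh x" d] i hV[OF x] by simp
  have "act C mu ((?xs[i := hh x])[i := asc C c (hh x)]) = asc C c (act C mu ((?xs[i := hh x])[i := hh x]))"
    by (rule palg_slot_sc[OF C _ _ H]) (use g i hV[OF x] in \<open>auto simp: free_gens_iff\<close>)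
  then show ?thesis using i
    by (intro conjI fin2) (simp add: Ev_dlt2[OF vsC] EvT_def upd_map hsc[OF x])
qed

lemma rel5: "(mu, dxs) \<in> free_gens P V \<Longrightarrow> r permutes {..<length dxs} \<Longrightarrow>
   finite {g. (\<lambda>h. dlt (operm P mu r, dxs) h - koszul r (map fst dxs) * dlt (mu, plist r dxs) h) g \<noteq> 0} \<and>
   Ev C hh (\<lambda>h. dlt (operm P mu r, dxs) h - koszul r (map fst dxs) * dlt (mu, plist r dxs) h) = 0"
proof -
  assume g: "(mu, dxs) \<in> free_gens P V" and r: "r permutes {..<length dxs}"
  have "act C (operm P mu r) (map (\<lambda>p. hh (snd p)) dxs) =
     asc C (koszul r (map fst dxs)) (act C mu (plist r (map (\<lambda>p. hh (snd p)) dxs)))"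
    by (rule palg_perm[OF C _ _ hom_gen[OF g]]) (use g r in \<open>auto simp: free_gens_iff\<close>)
  then show ?thesis
    by (intro conjI fin2) (simp add: Ev_dlt2[OF vsC] EvT_def plist_map[OF r])
qed

lemma rel_ok: "rr \<in> free_rels P A V \<Longrightarrow> finite {g. rr g \<noteq> 0} \<and> Ev C hh rr = 0"
  unfolding free_rels_def
  apply (elim UnE CollectE exE conjE)
      apply (hypsubst, rule rel1, assumption+)
     apply (hypsubst, rule rel2, assumption+)
    apply (hypsubst, rule rel3, assumption+)
   apply (hypsubst, rule rel4, assumption+)
  apply (hypsubst, rule rel5, assumption+)
  done

lemma Ev_rspan: "s \<in> rspan (free_rels P A V) \<Longrightarrow> finite {g. s g \<noteq> 0} \<and> Ev C hh s = 0"
proof (induction rule: rspan.induct)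
  case rspan_zero then show ?case by (simp add: Ev_def)
next
  case (rspan_step r s c)
  have r: "finite {g. r g \<noteq> 0} \<and> Ev C hh r = 0" using rel_ok[OF rspan_step(1)] .
  have e: "(\<lambda>g. c * r g + s g) = (\<lambda>g. c * r g + 1 * s g)" by simp
  show ?case unfolding e using r rspan_step(3) Ev_lin2[OF vsC, where sa=r and sb=s and a=c and b=1 and hh=hh] fin_lin2[where sa=r and sb=s and a=c and b=1]
    by (simp add: module.scale_zero_right[OF vsm[OF vsC]])
qed

end


lemma qf_sub: "quasi_free P A V \<Longrightarrow> lin_subspace (asc A) (V d)" unfolding quasi_free_def by auto
lemma qf_VC: "quasi_free P A V \<Longrightarrow> x \<in> V d \<Longrightarrow> x \<in> Car A d" unfolding quasi_free_def by auto
lemma qf_span: "quasi_free P A V \<Longrightarrow> Car A j = lspan (asc A) {act A mu xs | mu n ds xs.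
            mu \<in> Pa P n \<and> length xs = n \<and> homog V ds xs \<and> sum_list ds = j}"
  unfolding quasi_free_def by auto
lemma qf_inj:
  fixes P :: "('k::field, 'o::ab_group_add) operad" and A :: "('k, 'a::ab_group_add, 'o) dgpalg"
    and s :: "('o \<times> (int \<times> 'a) list) \<Rightarrow> 'k"
  shows "quasi_free P A V \<Longrightarrow> finite {g. s g \<noteq> 0} \<Longrightarrow>
   (\<And>g. s g \<noteq> 0 \<Longrightarrow> g \<in> free_gens P V \<and> sum_list (map fst (snd g)) = j) \<Longrightarrow>
   Ev A (\<lambda>x. x) s = 0 \<Longrightarrow> s \<in> rspan (free_rels P A V)"
proof -
  assume qf: "quasi_free P A V" and fin: "finite {g. s g \<noteq> 0}"
    and h: "\<And>g. s g \<noteq> 0 \<Longrightarrow> g \<in> free_gens P V \<and> sum_list (map fst (snd g)) = j"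
    and ev: "Ev A (\<lambda>x. x) s = 0"
  have H: "\<forall>j (s :: ('o \<times> (int \<times> 'a) list) \<Rightarrow> 'k). finite {g. s g \<noteq> 0} \<and>
        (\<forall>g. s g \<noteq> 0 \<longrightarrow> g \<in> free_gens P V \<and> sum_list (map fst (snd g)) = j) \<and>
        (\<Sum>g\<in>{g. s g \<noteq> 0}. asc A (s g) (act A (fst g) (map snd (snd g)))) = 0
        \<longrightarrow> s \<in> rspan (free_rels P A V)"
    using qf unfolding quasi_free_def by (elim conjE) assumption
  show ?thesis
    apply (rule mp[OF spec[OF spec[OF H, of j], of s]])
    apply (intro conjI allI impI fin)
      apply (erule h[THEN conjunct1])
     apply (erule h[THEN conjunct2])
    using ev unfolding Ev_def EvT_def by simp
qed

lemma lsub_0: "lin_subspace sc S \<Longrightarrow> 0 \<in> S" unfolding lin_subspace_def by auto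
lemma lsub_add: "lin_subspace sc S \<Longrightarrow> x \<in> S \<Longrightarrow> y \<in> S \<Longrightarrow> x + y \<in> S" unfolding lin_subspace_def by auto
lemma lsub_sc: "lin_subspace sc S \<Longrightarrow> x \<in> S \<Longrightarrow> sc c x \<in> S" unfolding lin_subspace_def by auto

lemma V0_zero:
  fixes P :: "('k::field, 'o::ab_group_add) operad" and A :: "('k, 'a::ab_group_add, 'o) dgpalg"
  assumes op: "is_operad P" and A: "is_palg P A" and qf: "quasi_free P A V" and d0: "deg0_is_P0 P A"
    and x: "x \<in> V 0"
  shows "x = 0"
proof -
  have "x \<in> Car A 0" using qf_VC[OF qf x] .
  then obtain u0 where u0: "u0 \<in> Pa P 0" and xu: "x = act A u0 []" using d0 unfolding deg0_is_P0_def by auto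
  have vs: "vector_space (asc A)" using palg_vs[OF A] .
  have 0: "0 \<in> Car A 0" using lsub_0[OF palg_sub[OF A]] .
  define a where "a = (ounit P, [(0::int, x)])"
  define b where "b = (u0, [] :: (int \<times> 'a) list)"
  define s :: "'o \<times> (int \<times> 'a) list \<Rightarrow> 'k" where "s = (\<lambda>g. dlt a g - 1 * dlt b g)"
  have ga: "a \<in> free_gens P V" unfolding a_def free_gens_iff using op_unit[OF op] x by simp
  have gb: "b \<in> free_gens P V" unfolding b_def free_gens_iff using u0 by simp
  have "s \<in> rspan (free_rels P A V)"
  proof (rule qf_inj[OF qf, where j=0])
    show "finite {g. s g \<noteq> 0}" unfolding s_def by (rule fin2)
    show "g \<in> free_gens P V \<and> sum_list (map fst (snd g)) = 0" if "s g \<noteq> 0" for g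
      using that ga gb unfolding s_def dlt_def by (auto split: if_splits simp: a_def b_def)
    show "Ev A (\<lambda>x. x) s = 0" unfolding s_def Ev_dlt2[OF vs]
      using palg_unit[OF A \<open>x \<in> Car A 0\<close>] xu by (simp add: EvT_def a_def b_def module.scale_one[OF vsm[OF vs]])
  qed
  define hh where "hh = (\<lambda>y. if y \<in> V 0 then 0 else y)"
  have hh_eq: "hh y = (if d = 0 then 0 else y)" if y: "y \<in> V d" for y d
  proof (cases "d = 0")
    case True then show ?thesis using y by (simp add: hh_def)
  next
    case False
    have "y \<in> V 0 \<Longrightarrow> y = 0" using palg_disj[OF A False qf_VC[OF qf y] qf_VC[OF qf]] by blast
    then show ?thesis using False by (auto simp: hh_def)
  qed
  interpret evctx P A V A hh
  proof
    show "is_palg P A" by (rule A)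
    show "hh x \<in> Car A d" if "x \<in> V d" for x d
      using hh_eq[OF that] qf_VC[OF qf that] lsub_0[OF palg_sub[OF A]] by simp
    show "hh (x + y) = hh x + hh y" if "x \<in> V d" "y \<in> V d" for x y d
      using hh_eq[OF that(1)] hh_eq[OF that(2)] hh_eq[OF lsub_add[OF qf_sub[OF qf] that]] by simp
    show "hh (asc A c x) = asc A c (hh x)" if "x \<in> V d" for x d c
      using hh_eq[OF that] hh_eq[OF lsub_sc[OF qf_sub[OF qf] that]] module.scale_zero_right[OF vsm[OF vs]] by simp
  qed
  have "Ev A hh s = 0" using Ev_rspan[OF \<open>s \<in> rspan _\<close>] by simp
  moreover have "hh x = 0" using hh_eq[OF x] by simp
  ultimately show "x = 0" unfolding s_def Ev_dlt2[OF vs]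
    using palg_unit[OF A 0] xu by (simp add: EvT_def a_def b_def module.scale_one[OF vsm[OF vs]])
qed


lemma dh_car: "dg_hom P A B f \<Longrightarrow> x \<in> Car A m \<Longrightarrow> f x \<in> Car B m" unfolding dg_hom_def by auto
lemma dh_add: "dg_hom P A B f \<Longrightarrow> x \<in> Car A m \<Longrightarrow> y \<in> Car A m \<Longrightarrow> f (x + y) = f x + f y"
  unfolding dg_hom_def by auto
lemma dh_sc: "dg_hom P A B f \<Longrightarrow> x \<in> Car A m \<Longrightarrow> f (asc A c x) = asc B c (f x)" unfolding dg_hom_def by auto
lemma dh_dif: "dg_hom P A B f \<Longrightarrow> x \<in> Car A m \<Longrightarrow> f (dif A x) = dif B (f x)" unfolding dg_hom_def by auto
lemma dh_act: "dg_hom P A B f \<Longrightarrow> mu \<in> Pa P n \<Longrightarrow> length xs = n \<Longrightarrow> homog (Car A) ds xs \<Longrightarrow>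
   f (act A mu xs) = act B mu (map f xs)" unfolding dg_hom_def by auto

lemma sub_simps[simp]: "Car (subalg P A V m) = gen_car P A V m" "asc (subalg P A V m) = asc A"
  "dif (subalg P A V m) = dif A" "act (subalg P A V m) = act A"
  by (simp_all add: subalg_def)

lemma homog_append: "homog C d1 x1 \<Longrightarrow> homog C d2 x2 \<Longrightarrow> homog C (d1 @ d2) (x1 @ x2)"
  unfolding homog_def by (auto simp: nth_append)

lemma homog_concat: "length dss = length xss \<Longrightarrow> (\<And>i. i < length xss \<Longrightarrow> homog C (dss ! i) (xss ! i)) \<Longrightarrow>
   homog C (concat dss) (concat xss)"
proof (induction xss arbitrary: dss)
  case Nil then show ?case by (simp add: homog_def)
next
  case (Cons x xss)
  then obtain d dss' where d: "dss = d # dss'" by (cases dss) auto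
  have "homog C d x" using Cons.prems(2)[of 0] d by simp
  moreover have "homog C (concat dss') (concat xss)"
  proof (rule Cons.IH)
    show "length dss' = length xss" using Cons.prems(1) d by simp
    show "homog C (dss' ! i) (xss ! i)" if "i < length xss" for i
      using Cons.prems(2)[of "Suc i"] that d by simp
  qed
  ultimately show ?case using d by (simp add: homog_append)
qed

lemma homog_len: "homog C ds xs \<Longrightarrow> length ds = length xs" unfolding homog_def by simp
lemma homog_nth: "homog C ds xs \<Longrightarrow> i < length xs \<Longrightarrow> xs ! i \<in> C (ds ! i)" unfolding homog_def by simp

lemma sum_list_concat': "sum_list (concat xss) = sum_list (map sum_list xss)"
  by (induction xss) auto

lemma sum_list_upd: "i < length xs \<Longrightarrow> sum_list (xs[i := v]) = sum_list xs - xs ! i + (v :: int)"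
proof (induction xs arbitrary: i)
  case Nil then show ?case by simp
next
  case (Cons a xs) then show ?case by (cases i) auto
qed

lemma sum_in_sub: "lin_subspace sc W \<Longrightarrow> (\<And>g. g \<in> S \<Longrightarrow> t g \<in> W) \<Longrightarrow> sum t S \<in> W"
proof (induction S rule: infinite_finite_induct)
  case (infinite A) then show ?case by (simp add: lsub_0)
next
  case empty then show ?case by (simp add: lsub_0)
next
  case (insert x F) then show ?case by (simp add: lsub_add)
qed

lemma lin_sum:
  fixes F :: "'a::ab_group_add \<Rightarrow> 'b::ab_group_add"
  assumes W: "lin_subspace sc W" and add: "\<And>x y. x \<in> W \<Longrightarrow> y \<in> W \<Longrightarrow> F (x + y) = F x + F y"
    and scl: "\<And>c x. x \<in> W \<Longrightarrow> F (sc c x) = sc' c (F x)"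
    and tW: "\<And>g. g \<in> S \<Longrightarrow> t g \<in> W"
  shows "F (\<Sum>g\<in>S. sc (cf g) (t g)) = (\<Sum>g\<in>S. sc' (cf g) (F (t g)))"
  using tW
proof (induction S rule: infinite_finite_induct)
  case (infinite A) then show ?case using add[OF lsub_0[OF W] lsub_0[OF W]] by simp
next
  case empty then show ?case using add[OF lsub_0[OF W] lsub_0[OF W]] by simp
next
  case (insert x S)
  have "F (\<Sum>g\<in>insert x S. sc (cf g) (t g)) = F (sc (cf x) (t x) + (\<Sum>g\<in>S. sc (cf g) (t g)))"
    using insert by simp
  also have "\<dots> = F (sc (cf x) (t x)) + F (\<Sum>g\<in>S. sc (cf g) (t g))"
  proof (rule add)
    show "sc (cf x) (t x) \<in> W" using insert.prems W by (simp add: lsub_sc)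
    show "(\<Sum>g\<in>S. sc (cf g) (t g)) \<in> W"
      by (rule sum_in_sub[OF W]) (use insert.prems W in \<open>simp add: lsub_sc\<close>)
  qed
  also have "\<dots> = (\<Sum>g\<in>insert x S. sc' (cf g) (F (t g)))"
    using insert scl by simp
  finally show ?case .
qed

lemma act_zero_slot: assumes A: "is_palg P A" and mu: "mu \<in> Pa P n" and l: "length xs = n"
  and h: "homog (Car A) ds xs" and i: "i < n" and z: "xs ! i = 0"
  shows "act A mu xs = 0"
proof -
  have vs: "vector_space (asc A)" using palg_vs[OF A] .
  have 0: "0 \<in> Car A (ds ! i)" using lsub_0[OF palg_sub[OF A]] .
  have e: "act A mu (xs[i := asc A 0 0]) = asc A 0 (act A mu (xs[i := 0]))"
    by (rule palg_slot_sc[OF A mu l h i 0])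
  have x: "xs[i := 0] = xs" using z by (metis list_update_id)
  have s0: "asc A 0 0 = 0" "asc A 0 (act A mu xs) = 0" by (rule module.scale_zero_left[OF vsm[OF vs]])+
  from e show ?thesis unfolding s0(1) x s0(2) .
qed

lemma two_le_sum: assumes nn: "\<And>j. j < length ds \<Longrightarrow> (0::int) \<le> ds ! j" and ik: "i \<noteq> k" "i < length ds" "k < length ds"
  shows "ds ! i + ds ! k \<le> sum_list ds"
proof -
  have "ds ! i + ds ! k = (\<Sum>j\<in>{i, k}. ds ! j)" using ik by simp
  also have "\<dots> \<le> (\<Sum>j\<in>{..<length ds}. ds ! j)"
    by (rule sum_mono2) (use ik nn in auto)
  also have "\<dots> = sum_list ds" by (simp add: sum_list_sum_nth atLeast0LessThan)
  finally show ?thesis .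
qed


section \<open>The extension construction\<close>

definition pureL :: "('k, 'o) operad \<Rightarrow> ('k, 'a, 'o) dgpalg \<Rightarrow> (int \<Rightarrow> 'a set) \<Rightarrow> int \<Rightarrow> int \<Rightarrow> 'a \<Rightarrow> bool" where
  "pureL P A V m j x \<longleftrightarrow> (\<exists>mu n ds xs. mu \<in> Pa P n \<and> length xs = n \<and> homog V ds xs \<and>
      (\<forall>d\<in>set ds. d \<le> m) \<and> sum_list ds = j \<and> x = act A mu xs)"

lemma gen_car_eq: "gen_car P A V m j = lspan (asc A) (Collect (pureL P A V m j))"
  unfolding gen_car_def pureL_def by (rule arg_cong[where f="lspan (asc A)"]) auto

locale extctx =
  fixes P :: "('k::field, 'o::ab_group_add) operad" and A :: "('k, 'a::ab_group_add, 'o) dgpalg"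
    and V :: "int \<Rightarrow> 'a set" and B :: "('k, 'b::ab_group_add, 'o) dgpalg"
    and e bnd L n :: int and f :: "'a \<Rightarrow> 'b"
  assumes op: "is_operad P" and dA: "is_dgpalg P e A" and dB: "is_dgpalg P e B"
    and qf: "quasi_free P A V" and mn: "minimal P e A V"
    and lowb: "\<And>d x. x \<in> V d \<Longrightarrow> x \<noteq> 0 \<Longrightarrow> bnd \<le> d" and b0: "0 \<le> bnd" and eb: "e + 1 \<le> bnd"
    and hl: "homology_le e B n" and Ln: "n < L + e"
    and fh: "dg_hom P (subalg P A V (L - 1)) B f"
begin

abbreviation G where "G m j \<equiv> gen_car P A V m j"

lemma pA: "is_palg P A" using dg_palg[OF dA] .
lemma pB: "is_palg P B" using dg_palg[OF dB] .
lemma vsA: "vector_space (asc A)" using palg_vs[OF pA] .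
lemma vsB: "vector_space (asc B)" using palg_vs[OF pB] .
lemmas mA = vsm[OF vsA]
lemmas mB = vsm[OF vsB]

lemma VC: "x \<in> V d \<Longrightarrow> x \<in> Car A d" using qf_VC[OF qf] .
lemma subA: "lin_subspace (asc A) (Car A m)" using palg_sub[OF pA] .
lemma subB: "lin_subspace (asc B) (Car B m)" using palg_sub[OF pB] .
lemma subV: "lin_subspace (asc A) (V d)" using qf_sub[OF qf] .
lemma G_sub: "lin_subspace (asc A) (G m j)" unfolding gen_car_def by (rule lspan_subspace[OF vsA])

lemma Vdisj: "x \<in> V d \<Longrightarrow> x \<in> V d' \<Longrightarrow> d \<noteq> d' \<Longrightarrow> x = 0"
  using palg_disj[OF pA _ VC VC] by blast

lemma pure_G: "pureL P A V m j x \<Longrightarrow> x \<in> G m j"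
  unfolding gen_car_eq by (rule lspan_base[OF vsA]) simp

lemma pure_car: "pureL P A V m j x \<Longrightarrow> x \<in> Car A j"
proof -
  assume "pureL P A V m j x"
  then obtain mu k ds xs where h: "mu \<in> Pa P k" "length xs = k" "homog V ds xs" "sum_list ds = j" "x = act A mu xs"
    unfolding pureL_def by blast
  have hc: "homog (Car A) ds xs" by (rule homog_mono[OF h(3)]) (use VC in blast)
  show ?thesis using palg_act[OF pA h(1) h(2) hc] h(4,5) by simp
qed

lemma G_car: "x \<in> G m j \<Longrightarrow> x \<in> Car A j"
  unfolding gen_car_eq by (erule lspan_sub[OF subA, rotated]) (auto intro: pure_car)

lemma G_mono: "m' \<le> m \<Longrightarrow> x \<in> G m' j \<Longrightarrow> x \<in> G m j"
proof -
  assume mm: "m' \<le> m" and x: "x \<in> G m' j"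
  have "Collect (pureL P A V m' j) \<subseteq> G m j"
  proof
    fix y assume "y \<in> Collect (pureL P A V m' j)"
    then have "pureL P A V m j y" unfolding pureL_def using mm by fastforce
    then show "y \<in> G m j" by (rule pure_G)
  qed
  then show ?thesis using x unfolding gen_car_eq[of P A V m'] by (rule lspan_sub[OF G_sub])
qed

lemma V_pure: "x \<in> V d \<Longrightarrow> d \<le> m \<Longrightarrow> pureL P A V m d x"
  unfolding pureL_def
  apply (rule exI[of _ "ounit P"], rule exI[of _ 1], rule exI[of _ "[d]"], rule exI[of _ "[x]"])
  using op_unit[OF op] palg_unit[OF pA VC] by (simp add: homog_def)

lemma V_G: "x \<in> V d \<Longrightarrow> d \<le> m \<Longrightarrow> x \<in> G m d" using pure_G V_pure by blast

lemma difA_car: "x \<in> Car A m \<Longrightarrow> dif A x \<in> Car A (m + e)" using dg_car[OF dA] .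
lemma difB_car: "x \<in> Car B m \<Longrightarrow> dif B x \<in> Car B (m + e)" using dg_car[OF dB] .
lemma difA0: "dif A 0 = 0"
  using dg_add[OF dA lsub_0[OF subA] lsub_0[OF subA]] by simp
lemma difB0: "dif B 0 = 0"
  using dg_add[OF dB lsub_0[OF subB] lsub_0[OF subB]] by simp

lemma f_car: "x \<in> G (L - 1) m \<Longrightarrow> f x \<in> Car B m" using dh_car[OF fh] by simp
lemma f_add: "x \<in> G (L - 1) m \<Longrightarrow> y \<in> G (L - 1) m \<Longrightarrow> f (x + y) = f x + f y" using dh_add[OF fh] by simp
lemma f_sc: "x \<in> G (L - 1) m \<Longrightarrow> f (asc A c x) = asc B c (f x)" using dh_sc[OF fh] by fastforce
lemma f_dif: "x \<in> G (L - 1) m \<Longrightarrow> f (dif A x) = dif B (f x)" using dh_dif[OF fh] by fastforce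
lemma f_act: "mu \<in> Pa P k \<Longrightarrow> length xs = k \<Longrightarrow> homog (G (L - 1)) ds xs \<Longrightarrow> f (act A mu xs) = act B mu (map f xs)"
  using dh_act[OF fh] by fastforce
lemma f0: "f 0 = 0"
  using f_add[OF lsub_0[OF G_sub] lsub_0[OF G_sub]] by simp

lemma dif_V: assumes x: "x \<in> V d" and dL: "d \<le> L" shows "dif A x \<in> G (L - 1) (d + e)"
proof -
  have "dif A x \<in> lspan (asc A) {act A mu xs | mu k ds xs.
         2 \<le> k \<and> mu \<in> Pa P k \<and> length xs = k \<and> homog V ds xs \<and> sum_list ds = d + e}"
    using mn x unfolding minimal_def by blast
  moreover have "{act A mu xs | mu k ds xs.
         2 \<le> k \<and> mu \<in> Pa P k \<and> length xs = k \<and> homog V ds xs \<and> sum_list ds = d + e} \<subseteq> G (L - 1) (d + e)"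
  proof
    fix y assume "y \<in> {act A mu xs | mu k ds xs.
         2 \<le> k \<and> mu \<in> Pa P k \<and> length xs = k \<and> homog V ds xs \<and> sum_list ds = d + e}"
    then obtain mu k ds xs where h: "2 \<le> k" "mu \<in> Pa P k" "length xs = k" "homog V ds xs" "sum_list ds = d + e"
      "y = act A mu xs" by blast
    have hC: "homog (Car A) ds xs" by (rule homog_mono[OF h(4)]) (use VC in blast)
    have ld: "length ds = k" using homog_len[OF h(4)] h(3) by simp
    show "y \<in> G (L - 1) (d + e)"
    proof (cases "\<exists>i<k. xs ! i = 0")
      case True
      then obtain i where "i < k" "xs ! i = 0" by blast
      then have "y = 0" using act_zero_slot[OF pA h(2) h(3) hC] h(6) by simp
      then show ?thesis using lsub_0[OF G_sub] by simp
    next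
      case False
      have ge: "bnd \<le> ds ! i" if "i < k" for i
        using lowb[OF homog_nth[OF h(4)]] False that h(3) by auto
      have le: "ds ! i \<le> L - 1" if i: "i < k" for i
      proof -
        define j where "j = (if i = 0 then 1 else 0::nat)"
        have j: "j \<noteq> i" "j < k" using h(1) i unfolding j_def by auto
        have nn: "\<And>t. t < length ds \<Longrightarrow> 0 \<le> ds ! t" using ge b0 ld by (metis order_trans)
        have "ds ! i + ds ! j \<le> sum_list ds"
          using two_le_sum[OF nn, of i j] j i ld by auto
        then show ?thesis using ge[OF j(2)] h(5) eb dL by linarith
      qed
      have "\<forall>d\<in>set ds. d \<le> L - 1" using le ld by (auto simp: in_set_conv_nth)
      then have "pureL P A V (L - 1) (d + e) y" unfolding pureL_def
        using h by blast
      then show ?thesis by (rule pure_G)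
    qed
  qed
  ultimately show ?thesis using lspan_sub[OF G_sub] by blast
qed

end


context extctx begin

lemma cycle_bnd: "v \<in> V L \<Longrightarrow> \<exists>y. y \<in> Car B L \<and> dif B y = f (dif A v)"
proof -
  assume v: "v \<in> V L"
  have dv: "dif A v \<in> G (L - 1) (L + e)" using dif_V[OF v] by simp
  have c: "f (dif A v) \<in> Car B (L + e)" using f_car[OF dv] .
  have "dif B (f (dif A v)) = f (dif A (dif A v))" using f_dif[OF dv] by simp
  also have "\<dots> = 0" using dg_dd[OF dA VC[OF v]] f0 by simp
  finally have z: "dif B (f (dif A v)) = 0" .
  have "\<forall>x\<in>Car B (L + e). dif B x = 0 \<longrightarrow> (\<exists>y\<in>Car B (L + e - e). dif B y = x)"
    using hl Ln unfolding homology_le_def by blast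
  then show ?thesis using c z by auto
qed

definition LP where "LP l \<longleftrightarrow> (\<forall>x\<in>V L. \<forall>y\<in>V L. \<forall>c. l (x + y) = l x + l y \<and> l (asc A c x) = asc B c (l x)) \<and>
   (\<forall>v\<in>V L. l v \<in> Car B L \<and> dif B (l v) = f (dif A v))"

lemma lift_exists: "\<exists>l. LP l"
proof -
  obtain bb where bb: "\<And>v. v \<in> V L \<Longrightarrow> bb v \<in> Car B L \<and> dif B (bb v) = f (dif A v)"
    using cycle_bnd by metis
  interpret VA: vector_space "asc A" by (rule vsA)
  interpret VP: vector_space_pair "asc A" "asc B" by (rule vector_space_pair.intro[OF vsA vsB])
  obtain Bs where Bs: "Bs \<subseteq> V L" "VA.independent Bs" "V L \<subseteq> VA.span Bs"
    using VA.basis_exists[of "V L"] by metis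
  define l where "l = VP.construct Bs bb"
  have lin: "Vector_Spaces.linear (asc A) (asc B) l" unfolding l_def using VP.linear_construct[OF Bs(2), of bb] .
  have ladd: "\<And>x y. l (x + y) = l x + l y" and lsc: "\<And>c x. l (asc A c x) = asc B c (l x)"
    using lin unfolding Vector_Spaces.linear_iff by auto
  have l0: "l 0 = 0" using ladd[of 0 0] by simp
  have lb: "\<And>x. x \<in> Bs \<Longrightarrow> l x = bb x" unfolding l_def by (rule VP.construct_basis[OF Bs(2)])
  have main: "v \<in> V L \<and> l v \<in> Car B L \<and> dif B (l v) = f (dif A v)" if vV: "v \<in> V L" for v
  proof -
    have "v \<in> VA.span Bs" using Bs(3) vV by blast
    then show ?thesis
    proof (induction rule: VA.span_induct_alt)
      case base
      show ?case using lsub_0[OF subV] l0 lsub_0[OF subB] difB0 difA0 f0 by simp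
    next
      case (step c x y)
      have x: "x \<in> V L" using step(1) Bs(1) by blast
      have y: "y \<in> V L" "l y \<in> Car B L" "dif B (l y) = f (dif A y)" using step(2) by auto
      have cxV: "asc A c x \<in> V L" using lsub_sc[OF subV x] .
      have sV: "asc A c x + y \<in> V L" using lsub_add[OF subV cxV y(1)] .
      have e1: "l (asc A c x + y) = asc B c (bb x) + l y" using ladd lsc lb[OF step(1)] by simp
      have bbx: "bb x \<in> Car B L" "dif B (bb x) = f (dif A x)" using bb[OF x] by auto
      have cb: "asc B c (bb x) \<in> Car B L" using lsub_sc[OF subB bbx(1)] .
      have inB: "asc B c (bb x) + l y \<in> Car B L" using lsub_add[OF subB cb y(2)] .
      have d1: "dif B (asc B c (bb x) + l y) = asc B c (f (dif A x)) + f (dif A y)"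
        using dg_add[OF dB cb y(2)] dg_sc[OF dB bbx(1)] bbx(2) y(3) by simp
      have d2: "dif A (asc A c x + y) = asc A c (dif A x) + dif A y"
        using dg_add[OF dA VC[OF cxV] VC[OF y(1)]] dg_sc[OF dA VC[OF x]] by simp
      have dx: "dif A x \<in> G (L - 1) (L + e)" using dif_V[OF x] by simp
      have dy: "dif A y \<in> G (L - 1) (L + e)" using dif_V[OF y(1)] by simp
      have d3: "f (asc A c (dif A x) + dif A y) = asc B c (f (dif A x)) + f (dif A y)"
        using f_add[OF lsub_sc[OF G_sub dx] dy] f_sc[OF dx] by simp
      show ?case using sV e1 inB d1 d2 d3 by simp
    qed
  qed
  have "LP l" unfolding LP_def using ladd lsc main by blast
  then show ?thesis by blast
qed

definition lift where "lift = (SOME l. LP l)"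

lemma LP_lift: "LP lift" unfolding lift_def using someI_ex[OF lift_exists] .

lemma lift_add: "x \<in> V L \<Longrightarrow> y \<in> V L \<Longrightarrow> lift (x + y) = lift x + lift y" using LP_lift unfolding LP_def by blast
lemma lift_sc: "x \<in> V L \<Longrightarrow> lift (asc A c x) = asc B c (lift x)" using LP_lift unfolding LP_def by blast
lemma lift_car: "x \<in> V L \<Longrightarrow> lift x \<in> Car B L" using LP_lift unfolding LP_def by blast
lemma lift_dif: "x \<in> V L \<Longrightarrow> dif B (lift x) = f (dif A x)" using LP_lift unfolding LP_def by blast
lemma lift0: "lift 0 = 0" using lift_add[OF lsub_0[OF subV] lsub_0[OF subV]] by simp

definition gp where "gp y = (if \<exists>d. d \<le> L - 1 \<and> y \<in> V d then f y else if y \<in> V L then lift y else 0)"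

lemma gp_low: "y \<in> V d \<Longrightarrow> d \<le> L - 1 \<Longrightarrow> gp y = f y" unfolding gp_def by auto

lemma gp_L: assumes y: "y \<in> V L" shows "gp y = lift y"
proof (cases "\<exists>d. d \<le> L - 1 \<and> y \<in> V d")
  case True
  then obtain d where "d \<le> L - 1" "y \<in> V d" by blast
  then have "y = 0" using Vdisj[OF _ y] by force
  then show ?thesis using True f0 lift0 unfolding gp_def by simp
next
  case False then show ?thesis unfolding gp_def using y by (simp only: if_not_P[OF False] if_P[OF y] if_True if_False)
qed

lemma gp_hi: assumes y: "y \<in> V d" and dL: "L < d" shows "gp y = 0"
proof (cases "y = 0")
  case True then show ?thesis unfolding gp_def using f0 lift0 by simp
next
  case False
  have n1: "\<not> (\<exists>d. d \<le> L - 1 \<and> y \<in> V d)" using Vdisj[OF _ y] False dL by force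
  have n2: "y \<notin> V L" using Vdisj[OF _ y] False dL by force
  show ?thesis unfolding gp_def by (simp only: if_not_P[OF n1] if_not_P[OF n2] if_False)
qed

lemma gp_car: assumes y: "y \<in> V d" shows "gp y \<in> Car B d"
proof -
  consider "d \<le> L - 1" | "d = L" | "L < d" by linarith
  then show ?thesis
  proof cases
    case 1 then show ?thesis using gp_low[OF y] f_car[OF V_G[OF y]] by simp
  next
    case 2 then show ?thesis using gp_L y lift_car by simp
  next
    case 3 then show ?thesis using gp_hi[OF y] lsub_0[OF subB] by simp
  qed
qed

lemma gp_add: assumes x: "x \<in> V d" and y: "y \<in> V d" shows "gp (x + y) = gp x + gp y"
proof -
  have xy: "x + y \<in> V d" using lsub_add[OF subV x y] .
  consider "d \<le> L - 1" | "d = L" | "L < d" by linarith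
  then show ?thesis
  proof cases
    case 1 then show ?thesis using gp_low[OF x] gp_low[OF y] gp_low[OF xy] f_add[OF V_G[OF x] V_G[OF y]] by simp
  next
    case 2 then show ?thesis using gp_L x y xy lift_add by simp
  next
    case 3 then show ?thesis using gp_hi[OF x] gp_hi[OF y] gp_hi[OF xy] by simp
  qed
qed

lemma gp_sc: assumes x: "x \<in> V d" shows "gp (asc A c x) = asc B c (gp x)"
proof -
  have cx: "asc A c x \<in> V d" using lsub_sc[OF subV x] .
  consider "d \<le> L - 1" | "d = L" | "L < d" by linarith
  then show ?thesis
  proof cases
    case 1 then show ?thesis using gp_low[OF x] gp_low[OF cx] f_sc[OF V_G[OF x]] by simp
  next
    case 2 then show ?thesis using gp_L x cx lift_sc by simp
  next
    case 3 then show ?thesis using gp_hi[OF x] gp_hi[OF cx] module.scale_zero_right[OF mB] by simp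
  qed
qed

lemma evB: "evctx P A V B gp"
  by (unfold_locales) (auto intro: pB gp_car gp_add gp_sc)

lemma evA: "evctx P A V A (\<lambda>x. x)"
  by (unfold_locales) (auto intro: pA VC)

end


lemma map_snd_zip': "length ds = length xs \<Longrightarrow> map (\<lambda>p. h (snd p)) (zip ds xs) = map h xs"
  by (induction ds xs rule: list_induct2) auto

lemma Ev_zero: "Ev C h (\<lambda>_. 0) = 0" unfolding Ev_def by simp

context extctx begin

definition rep :: "int \<Rightarrow> int \<Rightarrow> (('o \<times> (int \<times> 'a) list) \<Rightarrow> 'k) \<Rightarrow> bool" where
  "rep m j s \<longleftrightarrow> finite {g. s g \<noteq> 0} \<and> (\<forall>g. s g \<noteq> 0 \<longrightarrow> g \<in> free_gens P V \<and>
      (\<forall>p\<in>set (snd g). fst p \<le> m) \<and> sum_list (map fst (snd g)) = j)"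

abbreviation EvA where "EvA s \<equiv> Ev A (\<lambda>x. x) s"
abbreviation EvB where "EvB s \<equiv> Ev B gp s"

lemma rep_D: assumes "rep m j s" "s g \<noteq> 0"
  shows "g \<in> free_gens P V" "\<forall>p\<in>set (snd g). fst p \<le> m" "sum_list (map fst (snd g)) = j"
proof -
  have "\<forall>g. s g \<noteq> 0 \<longrightarrow> g \<in> free_gens P V \<and> (\<forall>p\<in>set (snd g). fst p \<le> m) \<and> sum_list (map fst (snd g)) = j"
    using assms(1) unfolding rep_def by (rule conjunct2)
  then have "s g \<noteq> 0 \<longrightarrow> g \<in> free_gens P V \<and> (\<forall>p\<in>set (snd g). fst p \<le> m) \<and> sum_list (map fst (snd g)) = j"
    by (rule spec)
  then have "g \<in> free_gens P V \<and> (\<forall>p\<in>set (snd g). fst p \<le> m) \<and> sum_list (map fst (snd g)) = j"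
    using assms(2) by (rule mp)
  then show "g \<in> free_gens P V" "\<forall>p\<in>set (snd g). fst p \<le> m" "sum_list (map fst (snd g)) = j" by auto
qed

lemma rep_fin: "rep m j s \<Longrightarrow> finite {g. s g \<noteq> 0}" unfolding rep_def by (rule conjunct1)

lemma rep_mono: "rep m j s \<Longrightarrow> m \<le> m' \<Longrightarrow> rep m' j s"
  unfolding rep_def by fastforce

lemma rep_zero: "rep m j (\<lambda>_. 0)" unfolding rep_def by simp

lemma rep_lin: "rep m j sa \<Longrightarrow> rep m j sb \<Longrightarrow> rep m j (\<lambda>g. a * sa g + b * sb g)"
  unfolding rep_def
  apply (intro conjI)
   apply (rule fin_lin2; simp)
  apply (intro allI impI)
  by (metis add.right_neutral mult_zero_right)

lemma rep_gen: assumes mu: "mu \<in> Pa P k" and l: "length xs = k" and h: "homog V ds xs"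
  and dm: "\<forall>d\<in>set ds. d \<le> m" and sj: "sum_list ds = j"
  shows "rep m j (dlt (mu, zip ds xs))"
proof -
  have ld: "length ds = length xs" using homog_len[OF h] .
  have g: "(mu, zip ds xs) \<in> free_gens P V" unfolding free_gens_iff
  proof
    show "mu \<in> Pa P (length (zip ds xs))" using mu l ld by simp
    show "\<forall>p\<in>set (zip ds xs). snd p \<in> V (fst p)"
    proof
      fix p assume "p \<in> set (zip ds xs)"
      then obtain i where "i < length xs" "p = (ds ! i, xs ! i)" using ld by (auto simp: set_zip)
      then show "snd p \<in> V (fst p)" using homog_nth[OF h] by simp
    qed
  qed
  have "\<forall>p\<in>set (zip ds xs). fst p \<le> m" using dm by (auto dest: set_zip_leftD)
  moreover have "sum_list (map fst (zip ds xs)) = j" using ld sj by simp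
  ultimately show ?thesis using g fin_dlt unfolding rep_def dlt_def by (auto split: if_splits)
qed

lemma EvT_gen: "length ds = length xs \<Longrightarrow> EvT C h (mu, zip ds xs) = act C mu (map h xs)"
  unfolding EvT_def by (simp add: map_snd_zip')

lemma rep_exists: "x \<in> G m j \<Longrightarrow> \<exists>s. rep m j s \<and> EvA s = x"
  unfolding gen_car_eq
proof (induction rule: lspan_induct)
  case 1 then show ?case using rep_zero Ev_zero by blast
next
  case (2 c y z)
  obtain s where s: "rep m j s" "EvA s = z" using 2(3) by blast
  obtain mu k ds xs where h: "mu \<in> Pa P k" "length xs = k" "homog V ds xs" "\<forall>d\<in>set ds. d \<le> m"
    "sum_list ds = j" "y = act A mu xs" using 2(1) unfolding pureL_def by blast
  have ld: "length ds = length xs" using homog_len[OF h(3)] .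
  have r: "rep m j (dlt (mu, zip ds xs))" using rep_gen[OF h(1-5)] .
  have fr: "finite {g. dlt (mu, zip ds xs) g \<noteq> (0::'k)}" "finite {g. s g \<noteq> 0}" using r s(1) unfolding rep_def by auto
  have "EvA (\<lambda>g. c * dlt (mu, zip ds xs) g + 1 * s g) = asc A c (EvA (dlt (mu, zip ds xs))) + asc A 1 (EvA s)"
    by (rule Ev_lin2[OF vsA fr])
  also have "\<dots> = asc A c y + z"
    using h(6) s(2) by (simp add: module.scale_one[OF mA] Ev_dlt[OF vsA] EvT_gen[OF ld])
  finally show ?case using rep_lin[OF r s(1), of c 1] by blast
qed

lemma EvT_pure: "g \<in> free_gens P V \<Longrightarrow> (\<forall>p\<in>set (snd g). fst p \<le> m) \<Longrightarrow> sum_list (map fst (snd g)) = j \<Longrightarrow>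
   pureL P A V m j (EvT A (\<lambda>x. x) g)"
proof -
  assume g: "g \<in> free_gens P V" and m: "\<forall>p\<in>set (snd g). fst p \<le> m" and j: "sum_list (map fst (snd g)) = j"
  obtain mu dxs where gd: "g = (mu, dxs)" by (cases g)
  have hv: "\<forall>p\<in>set dxs. snd p \<in> V (fst p)" using g[unfolded gd free_gens_iff] by (rule conjunct2)
  have "homog V (map fst dxs) (map snd dxs)" unfolding homog_def using hv nth_mem by fastforce
  moreover have "mu \<in> Pa P (length (map snd dxs))" using g[unfolded gd free_gens_iff] by simp
  ultimately show ?thesis unfolding pureL_def EvT_def using gd m j by fastforce
qed

lemma sum_sub: "lin_subspace sc W \<Longrightarrow> (\<And>g. s g \<noteq> 0 \<Longrightarrow> t g \<in> W) \<Longrightarrow> (\<Sum>g\<in>{g. s g \<noteq> 0}. sc (s g) (t g)) \<in> W"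
  by (rule sum_in_sub) (auto intro: lsub_sc)

lemma EvA_G: assumes r: "rep m j s" shows "EvA s \<in> G m j"
  unfolding Ev_def
proof (rule sum_sub[OF G_sub])
  fix g assume sg: "s g \<noteq> 0"
  show "EvT A (\<lambda>x. x) g \<in> G m j" by (rule pure_G[OF EvT_pure[OF rep_D(1)[OF r sg] rep_D(2)[OF r sg] rep_D(3)[OF r sg]]])
qed

lemma EvB_car: "rep m j s \<Longrightarrow> EvB s \<in> Car B j"
  unfolding Ev_def
proof (rule sum_sub[OF subB])
  fix g assume r: "rep m j s" and sg: "s g \<noteq> 0"
  obtain mu dxs where gd: "g = (mu, dxs)" by (cases g)
  have g: "(mu, dxs) \<in> free_gens P V" "sum_list (map fst dxs) = j" using rep_D[OF r sg] gd by auto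
  show "EvT B gp g \<in> Car B j"
    using palg_act[OF pB _ _ evctx.hom_gen[OF evB g(1)]] g g(1)[unfolded free_gens_iff] unfolding EvT_def gd by auto
qed

lemma wd: assumes r1: "rep L j sa" and r2: "rep L j sb" and eq: "EvA sa = EvA sb" shows "EvB sa = EvB sb"
proof -
  define s where "s = (\<lambda>g. 1 * sa g + (-1) * sb g)"
  have r: "rep L j s" unfolding s_def by (rule rep_lin[OF r1 r2])
  have f1: "finite {g. sa g \<noteq> 0}" and f2: "finite {g. sb g \<noteq> 0}" using rep_fin r1 r2 by auto
  have "EvA s = EvA sa - EvA sb" unfolding s_def Ev_lin2[OF vsA f1 f2]
    by (simp add: module.scale_one[OF mA] module.scale_minus_left[OF mA])
  then have "EvA s = 0" using eq by simp
  then have "s \<in> rspan (free_rels P A V)"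
    using qf_inj[OF qf rep_fin[OF r], of j] rep_D[OF r] by blast
  then have "EvB s = 0" using evctx.Ev_rspan[OF evB] by blast
  moreover have "EvB s = EvB sa - EvB sb" unfolding s_def Ev_lin2[OF vsB f1 f2]
    by (simp add: module.scale_one[OF mB] module.scale_minus_left[OF mB])
  ultimately show ?thesis by simp
qed

definition gg where "gg x = (SOME y. \<exists>j s. rep L j s \<and> EvA s = x \<and> y = EvB s)"

lemma gg_eq: assumes r: "rep L j s" shows "gg (EvA s) = EvB s"
proof -
  have "\<exists>y. \<exists>j s'. rep L j s' \<and> EvA s' = EvA s \<and> y = EvB s'" using r by blast
  from someI_ex[OF this] obtain j' s' where s': "rep L j' s'" "EvA s' = EvA s" "gg (EvA s) = EvB s'"
    unfolding gg_def by blast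
  show ?thesis
  proof (cases "j' = j")
    case True then show ?thesis using wd[OF s'(1) _ s'(2)] r s'(3) by simp
  next
    case False
    have c1: "EvA s \<in> Car A j'" using G_car[OF EvA_G[OF s'(1)]] s'(2) by simp
    have "EvA s = 0" using palg_disj[OF pA False c1 G_car[OF EvA_G[OF r]]] .
    then have z1: "EvB s = 0" using wd[OF r rep_zero] Ev_zero by metis
    have z2: "EvB s' = 0" using wd[OF s'(1) rep_zero] Ev_zero \<open>EvA s = 0\<close> s'(2) by metis
    show ?thesis using z1 z2 s'(3) by simp
  qed
qed

lemma gg_car: "x \<in> G L j \<Longrightarrow> gg x \<in> Car B j"
  using rep_exists gg_eq EvB_car by metis

lemma gg_add: assumes x: "x \<in> G L j" and y: "y \<in> G L j" shows "gg (x + y) = gg x + gg y"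
proof -
  obtain sa where sa: "rep L j sa" "EvA sa = x" using rep_exists[OF x] by blast
  obtain sb where sb: "rep L j sb" "EvA sb = y" using rep_exists[OF y] by blast
  have f1: "finite {g. sa g \<noteq> 0}" and f2: "finite {g. sb g \<noteq> 0}" using rep_fin sa sb by auto
  have e1: "EvA (\<lambda>g. 1 * sa g + 1 * sb g) = asc A 1 (EvA sa) + asc A 1 (EvA sb)" by (rule Ev_lin2[OF vsA f1 f2])
  have e2: "EvB (\<lambda>g. 1 * sa g + 1 * sb g) = asc B 1 (EvB sa) + asc B 1 (EvB sb)" by (rule Ev_lin2[OF vsB f1 f2])
  have r: "rep L j (\<lambda>g. 1 * sa g + 1 * sb g)" by (rule rep_lin[OF sa(1) sb(1)])
  have z: "(\<lambda>g. 1 * sa g + 1 * sb g) = (\<lambda>g. sa g + sb g)" by simp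
  have e1': "EvA (\<lambda>g. sa g + sb g) = x + y" using e1 sa(2) sb(2) unfolding z by (simp add: module.scale_one[OF mA])
  have e2': "EvB (\<lambda>g. sa g + sb g) = EvB sa + EvB sb" using e2 unfolding z by (simp add: module.scale_one[OF mB])
  have r': "rep L j (\<lambda>g. sa g + sb g)" using r unfolding z .
  show ?thesis using gg_eq[OF r'] gg_eq[OF sa(1)] gg_eq[OF sb(1)] e1' e2' sa(2) sb(2) by simp
qed

lemma gg_sc: assumes x: "x \<in> G L j" shows "gg (asc A c x) = asc B c (gg x)"
proof -
  obtain sa where sa: "rep L j sa" "EvA sa = x" using rep_exists[OF x] by blast
  have f1: "finite {g. sa g \<noteq> 0}" using rep_fin sa by auto
  have e1: "EvA (\<lambda>g. c * sa g + 0 * sa g) = asc A c (EvA sa) + asc A 0 (EvA sa)" by (rule Ev_lin2[OF vsA f1 f1])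
  have e2: "EvB (\<lambda>g. c * sa g + 0 * sa g) = asc B c (EvB sa) + asc B 0 (EvB sa)" by (rule Ev_lin2[OF vsB f1 f1])
  have r: "rep L j (\<lambda>g. c * sa g + 0 * sa g)" by (rule rep_lin[OF sa(1) sa(1)])
  have z: "(\<lambda>g. c * sa g + 0 * sa g) = (\<lambda>g. c * sa g)" by simp
  have e1': "EvA (\<lambda>g. c * sa g) = asc A c x" using e1 sa(2) unfolding z by (simp add: module.scale_zero_left[OF mA])
  have e2': "EvB (\<lambda>g. c * sa g) = asc B c (EvB sa)" using e2 unfolding z by (simp add: module.scale_zero_left[OF mB])
  have r': "rep L j (\<lambda>g. c * sa g)" using r unfolding z .
  show ?thesis using gg_eq[OF r'] gg_eq[OF sa(1)] e1' e2' sa(2) by simp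
qed

lemma gg0: "gg 0 = 0" using gg_add[OF lsub_0[OF G_sub] lsub_0[OF G_sub]] by simp

lemma gg_pure: assumes mu: "mu \<in> Pa P k" and l: "length xs = k" and h: "homog V ds xs"
  and dm: "\<forall>d\<in>set ds. d \<le> L"
  shows "gg (act A mu xs) = act B mu (map gp xs)"
proof -
  have ld: "length ds = length xs" using homog_len[OF h] .
  have r: "rep L (sum_list ds) (dlt (mu, zip ds xs))" using rep_gen[OF mu l h dm refl] .
  have "EvA (dlt (mu, zip ds xs)) = act A mu xs" by (simp add: Ev_dlt[OF vsA] EvT_gen[OF ld])
  moreover have "EvB (dlt (mu, zip ds xs)) = act B mu (map gp xs)" by (simp add: Ev_dlt[OF vsB] EvT_gen[OF ld])
  ultimately show ?thesis using gg_eq[OF r] by simp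
qed

lemma gg_V: assumes x: "x \<in> V d" and dL: "d \<le> L" shows "gg x = gp x"
proof -
  have "gg (act A (ounit P) [x]) = act B (ounit P) (map gp [x])"
    by (rule gg_pure[OF op_unit[OF op], where xs="[x]" and ds="[d]"]) (use x dL in \<open>auto simp: homog_def\<close>)
  then show ?thesis using palg_unit[OF pA VC[OF x]] palg_unit[OF pB gp_car[OF x]] by simp
qed

lemma gg_f: assumes x: "x \<in> G (L - 1) j" shows "gg x = f x"
proof -
  obtain s where s: "rep (L - 1) j s" "EvA s = x" using rep_exists[OF x] by blast
  have gx: "gg x = EvB s" using gg_eq[OF rep_mono[OF s(1)]] s(2) by simp
  have tW: "EvT A (\<lambda>x. x) g \<in> G (L - 1) j" if "g \<in> {g. s g \<noteq> 0}" for g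
  proof -
    have sg: "s g \<noteq> 0" using that by simp
    show ?thesis by (rule pure_G[OF EvT_pure[OF rep_D(1)[OF s(1) sg] rep_D(2)[OF s(1) sg] rep_D(3)[OF s(1) sg]]])
  qed
  have "f x = (\<Sum>g\<in>{g. s g \<noteq> 0}. asc B (s g) (f (EvT A (\<lambda>x. x) g)))"
    unfolding s(2)[symmetric] Ev_def
    by (rule lin_sum[OF G_sub]) (auto intro: f_add f_sc tW)
  also have "\<dots> = EvB s" unfolding Ev_def
  proof (rule sum.cong[OF refl])
    fix g assume "g \<in> {g. s g \<noteq> 0}"
    then have g: "g \<in> free_gens P V" "\<forall>p\<in>set (snd g). fst p \<le> L - 1" using rep_D[OF s(1)] by auto
    obtain mu dxs where gd: "g = (mu, dxs)" by (cases g)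
    have mu: "mu \<in> Pa P (length (map snd dxs))" and hv: "\<forall>p\<in>set dxs. snd p \<in> V (fst p)"
      using g(1)[unfolded gd free_gens_iff] by auto
    have hG: "homog (G (L - 1)) (map fst dxs) (map snd dxs)"
      unfolding homog_def using hv g(2) gd by (auto intro!: V_G)
    have "f (EvT A (\<lambda>x. x) g) = act B mu (map f (map snd dxs))"
      unfolding gd EvT_def using f_act[OF mu refl hG] by simp
    also have "map f (map snd dxs) = map (\<lambda>p. gp (snd p)) dxs"
      using hv g(2) gd by (auto intro!: gp_low[symmetric])
    finally show "asc B (s g) (f (EvT A (\<lambda>x. x) g)) = asc B (s g) (EvT B gp g)"
      unfolding gd EvT_def by simp
  qed
  finally show ?thesis using gx by simp
qed

end


context extctx begin

lemma hom_pure: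
  assumes mu: "mu \<in> Pa P k" and l: "length xs = k" and hd: "length ds = k"
    and pu: "\<forall>i<k. pureL P A V L (ds ! i) (xs ! i)"
  shows "act A mu xs \<in> G L (sum_list ds) \<and> gg (act A mu xs) = act B mu (map gg xs)"
proof -
  have "\<forall>i\<in>{..<k}. \<exists>t. fst t \<in> Pa P (length (snd (snd t))) \<and> homog V (fst (snd t)) (snd (snd t)) \<and>
      (\<forall>d\<in>set (fst (snd t)). d \<le> L) \<and> sum_list (fst (snd t)) = ds ! i \<and> xs ! i = act A (fst t) (snd (snd t))"
  proof
    fix i assume "i \<in> {..<k}"
    then have "pureL P A V L (ds ! i) (xs ! i)" using pu by simp
    then obtain nu m dd ys where h: "nu \<in> Pa P m" "length ys = m" "homog V dd ys" "\<forall>d\<in>set dd. d \<le> L"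
      "sum_list dd = ds ! i" "xs ! i = act A nu ys" unfolding pureL_def by blast
    show "\<exists>t. fst t \<in> Pa P (length (snd (snd t))) \<and> homog V (fst (snd t)) (snd (snd t)) \<and>
      (\<forall>d\<in>set (fst (snd t)). d \<le> L) \<and> sum_list (fst (snd t)) = ds ! i \<and> xs ! i = act A (fst t) (snd (snd t))"
      by (rule exI[of _ "(nu, dd, ys)"]) (use h in simp)
  qed
  then obtain T where T: "\<And>i. i < k \<Longrightarrow> fst (T i) \<in> Pa P (length (snd (snd (T i)))) \<and> homog V (fst (snd (T i))) (snd (snd (T i))) \<and>
      (\<forall>d\<in>set (fst (snd (T i))). d \<le> L) \<and> sum_list (fst (snd (T i))) = ds ! i \<and> xs ! i = act A (fst (T i)) (snd (snd (T i)))"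
    using bchoice[of "{..<k}"] by (metis lessThan_iff)
  define nus where "nus = map (\<lambda>i. fst (T i)) [0..<k]"
  define dss where "dss = map (\<lambda>i. fst (snd (T i))) [0..<k]"
  define yss where "yss = map (\<lambda>i. snd (snd (T i))) [0..<k]"
  have ln: "length nus = k" "length dss = k" "length yss = k" unfolding nus_def dss_def yss_def by simp_all
  have Ti: "nus ! i \<in> Pa P (length (yss ! i))" "homog V (dss ! i) (yss ! i)" "\<forall>d\<in>set (dss ! i). d \<le> L"
    "sum_list (dss ! i) = ds ! i" "xs ! i = act A (nus ! i) (yss ! i)" if "i < k" for i
    using T[OF that] that unfolding nus_def dss_def yss_def by auto
  have xs_eq: "xs = map (\<lambda>i. act A (nus ! i) (yss ! i)) [0..<k]"
    by (rule nth_equalityI) (use l Ti(5) in auto)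
  have hCA: "homog (Car A) (dss ! i) (yss ! i)" if "i < k" for i
    by (rule homog_mono[OF Ti(2)[OF that]]) (use VC in blast)
  have assA: "act A (ocomp P mu nus) (concat yss) = act A mu xs"
    unfolding xs_eq by (rule palg_assoc[OF pA mu ln(1) ln(3)]) (use Ti(1) hCA in blast)
  have oc: "ocomp P mu nus \<in> Pa P (length (concat yss))"
    using op_comp[OF op mu ln(1), of "map length yss"] Ti(1) ln by (simp add: length_concat)
  have hc: "homog V (concat dss) (concat yss)"
    by (rule homog_concat) (use ln Ti(2) in auto)
  have bd: "\<forall>d\<in>set (concat dss). d \<le> L"
  proof
    fix d assume "d \<in> set (concat dss)"
    then obtain zs where zs: "zs \<in> set dss" "d \<in> set zs" by auto
    then obtain i where "i < length dss" "zs = dss ! i" by (auto simp: in_set_conv_nth)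
    then show "d \<le> L" using Ti(3)[of i] ln zs(2) by auto
  qed
  have "map sum_list dss = ds" by (rule nth_equalityI) (use ln hd Ti(4) in auto)
  then have sd: "sum_list (concat dss) = sum_list ds" by (simp add: sum_list_concat')
  have pure: "pureL P A V L (sum_list ds) (act A mu xs)"
    unfolding pureL_def using oc hc bd sd assA[symmetric] by blast
  have "gg (act A mu xs) = act B (ocomp P mu nus) (map gp (concat yss))"
    using gg_pure[OF oc refl hc bd] assA by simp
  also have "\<dots> = act B (ocomp P mu nus) (concat (map (map gp) yss))" by (simp add: map_concat)
  also have "\<dots> = act B mu (map (\<lambda>i. act B (nus ! i) (map (map gp) yss ! i)) [0..<k])"
  proof (rule palg_assoc[OF pB mu ln(1)])
    show "length (map (map gp) yss) = k" using ln by simp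
    show "\<forall>i<k. nus ! i \<in> Pa P (length (map (map gp) yss ! i)) \<and> (\<exists>ds. homog (Car B) ds (map (map gp) yss ! i))"
    proof (intro allI impI conjI)
      fix i assume i: "i < k"
      show "nus ! i \<in> Pa P (length (map (map gp) yss ! i))" using Ti(1)[OF i] ln i by simp
      have "homog (Car B) (dss ! i) (map gp (yss ! i))"
        by (rule homog_map[OF Ti(2)[OF i]]) (use homog_nth[OF Ti(2)[OF i]] gp_car in blast)
      then show "\<exists>ds. homog (Car B) ds (map (map gp) yss ! i)" using ln i by auto
    qed
  qed
  also have "map (\<lambda>i. act B (nus ! i) (map (map gp) yss ! i)) [0..<k] = map gg xs"
  proof (rule nth_equalityI)
    show "length (map (\<lambda>i. act B (nus ! i) (map (map gp) yss ! i)) [0..<k]) = length (map gg xs)" using l by simp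
    fix i assume "i < length (map (\<lambda>i. act B (nus ! i) (map (map gp) yss ! i)) [0..<k])"
    then have i: "i < k" by simp
    show "map (\<lambda>i. act B (nus ! i) (map (map gp) yss ! i)) [0..<k] ! i = map gg xs ! i"
      using gg_pure[OF Ti(1)[OF i] refl Ti(2)[OF i] Ti(3)[OF i]] Ti(5)[OF i] i l ln by simp
  qed
  finally show ?thesis using pure_G[OF pure] by simp
qed

lemma hom_r: "mu \<in> Pa P k \<Longrightarrow> length xs = k \<Longrightarrow> homog (G L) ds xs \<Longrightarrow>
   (\<forall>i. r \<le> i \<and> i < k \<longrightarrow> pureL P A V L (ds ! i) (xs ! i)) \<Longrightarrow>
   act A mu xs \<in> G L (sum_list ds) \<and> gg (act A mu xs) = act B mu (map gg xs)"
proof (induction r arbitrary: xs)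
  case 0
  show ?case by (rule hom_pure[OF 0(1) 0(2)]) (use 0 homog_len[OF 0(3)] in auto)
next
  case (Suc r)
  note mu = Suc.prems(1) and l = Suc.prems(2) and hG = Suc.prems(3) and pu = Suc.prems(4)
  show ?case
  proof (cases "r < k")
    case False
    then show ?thesis using Suc.IH[OF mu l hG] pu by auto
  next
    case True
    have ld: "length ds = k" using homog_len[OF hG] l by simp
    have hA: "homog (Car A) ds xs" by (rule homog_mono[OF hG]) (use G_car in blast)
    have hB: "homog (Car B) ds (map gg xs)"
      by (rule homog_map[OF hG]) (use homog_nth[OF hG] gg_car in blast)
    let ?Q = "\<lambda>x. act A mu (xs[r := x]) \<in> G L (sum_list ds) \<and> gg (act A mu (xs[r := x])) = act B mu (map gg (xs[r := x]))"
    have xr: "xs ! r \<in> lspan (asc A) (Collect (pureL P A V L (ds ! r)))"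
      using homog_nth[OF hG] True l unfolding gen_car_eq by simp
    have "?Q (xs ! r)" using xr
    proof (induction rule: lspan_induct)
      case 1
      have h0: "homog (Car A) ds (xs[r := 0])" by (rule homog_upd[OF hA]) (use True l lsub_0[OF subA] in auto)
      have a0: "act A mu (xs[r := 0]) = 0" by (rule act_zero_slot[OF pA mu _ h0, of r]) (use True l in auto)
      have hB0: "homog (Car B) ds ((map gg xs)[r := 0])" by (rule homog_upd[OF hB]) (use True l lsub_0[OF subB] in auto)
      have b0: "act B mu ((map gg xs)[r := 0]) = 0" by (rule act_zero_slot[OF pB mu _ hB0, of r]) (use True l in auto)
      show ?case using a0 b0 gg0 lsub_0[OF G_sub] by (simp add: map_update)
    next
      case (2 c y z)
      have yG: "y \<in> G L (ds ! r)" using 2(1) by (simp add: pure_G)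
      have zG: "z \<in> G L (ds ! r)" using 2(2) unfolding gen_car_eq .
      have yA: "y \<in> Car A (ds ! r)" and zA: "z \<in> Car A (ds ! r)" using G_car yG zG by auto
      have cyA: "asc A c y \<in> Car A (ds ! r)" using lsub_sc[OF subA yA] .
      have Qy: "?Q y"
      proof (rule Suc.IH[OF mu])
        show "length (xs[r := y]) = k" using l by simp
        show "homog (G L) ds (xs[r := y])" by (rule homog_upd[OF hG]) (use True l yG in auto)
        show "\<forall>i. r \<le> i \<and> i < k \<longrightarrow> pureL P A V L (ds ! i) (xs[r := y] ! i)"
        proof (intro allI impI)
          fix i assume i: "r \<le> i \<and> i < k"
          show "pureL P A V L (ds ! i) (xs[r := y] ! i)"
          proof (cases "i = r")
            case True then show ?thesis using 2(1) l i by simp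
          next
            case False
            then have "Suc r \<le> i" using i by simp
            then show ?thesis using pu i False by simp
          qed
        qed
      qed
      have Qz: "?Q z" using 2(3) .
      have e1: "act A mu (xs[r := asc A c y + z]) = asc A c (act A mu (xs[r := y])) + act A mu (xs[r := z])"
        using palg_slot_add[OF pA mu l hA _ cyA zA] palg_slot_sc[OF pA mu l hA _ yA] True by simp
      have inG: "act A mu (xs[r := asc A c y + z]) \<in> G L (sum_list ds)"
        unfolding e1 using Qy Qz by (intro lsub_add[OF G_sub] lsub_sc[OF G_sub]) auto
      have gyz: "gg (asc A c y + z) = asc B c (gg y) + gg z"
        using gg_add[OF lsub_sc[OF G_sub yG] zG] gg_sc[OF yG] by simp
      have gyB: "gg y \<in> Car B (ds ! r)" and gzB: "gg z \<in> Car B (ds ! r)" using gg_car yG zG by auto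
      have cgyB: "asc B c (gg y) \<in> Car B (ds ! r)" using lsub_sc[OF subB gyB] .
      have lB: "length (map gg xs) = k" using l by simp
      have e2: "act B mu ((map gg xs)[r := asc B c (gg y) + gg z]) =
          asc B c (act B mu ((map gg xs)[r := gg y])) + act B mu ((map gg xs)[r := gg z])"
        using palg_slot_add[OF pB mu lB hB _ cgyB gzB] palg_slot_sc[OF pB mu lB hB _ gyB] True by simp
      have "gg (act A mu (xs[r := asc A c y + z])) =
          asc B c (gg (act A mu (xs[r := y]))) + gg (act A mu (xs[r := z]))"
        unfolding e1 using Qy Qz gg_add[OF lsub_sc[OF G_sub] ] gg_sc by (metis lsub_sc[OF G_sub] gg_add gg_sc)
      also have "\<dots> = act B mu (map gg (xs[r := asc A c y + z]))"
        using Qy Qz e2 gyz by (simp add: map_update)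
      finally show ?case using inG by simp
    qed
    then show ?thesis by simp
  qed
qed

lemma hom_G: assumes "mu \<in> Pa P k" "length xs = k" "homog (G L) ds xs"
  shows "act A mu xs \<in> G L (sum_list ds) \<and> gg (act A mu xs) = act B mu (map gg xs)"
  by (rule hom_r[OF assms, of k]) auto

end


context extctx begin

lemma gg_dif_V: assumes v: "v \<in> V d" and dL: "d \<le> L" shows "gg (dif A v) = dif B (gp v)"
proof -
  have dv: "dif A v \<in> G (L - 1) (d + e)" using dif_V[OF v dL] .
  have "gg (dif A v) = f (dif A v)" using gg_f[OF dv] .
  moreover have "f (dif A v) = dif B (gp v)"
  proof (cases "d \<le> L - 1")
    case True
    then show ?thesis using f_dif[OF V_G[OF v True]] gp_low[OF v True] by simp
  next
    case False
    then have "d = L" using dL by simp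
    then show ?thesis using lift_dif gp_L v by simp
  qed
  ultimately show ?thesis by simp
qed

lemma dif_pure: assumes py: "pureL P A V L m y"
  shows "dif A y \<in> G L (m + e) \<and> gg (dif A y) = dif B (gg y)"
proof -
  obtain nu k ds ys where h: "nu \<in> Pa P k" "length ys = k" "homog V ds ys" "\<forall>d\<in>set ds. d \<le> L"
    "sum_list ds = m" "y = act A nu ys" using py unfolding pureL_def by blast
  have ld: "length ds = k" using homog_len[OF h(3)] h(2) by simp
  have hCA: "homog (Car A) ds ys" by (rule homog_mono[OF h(3)]) (use VC in blast)
  have dsL: "ds ! i \<le> L" if "i < k" for i using h(4) that ld by auto
  have yV: "ys ! i \<in> V (ds ! i)" if "i < k" for i using homog_nth[OF h(3)] that h(2) by simp
  have hGL: "homog (G L) ds ys" by (rule homog_map[OF h(3), of "\<lambda>x. x", simplified]) (use yV dsL V_G h(2) in auto)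
  define kk where "kk i = (ksign (e * sum_list (take i ds)) :: 'k)" for i
  define T where "T i = act A nu (ys[i := dif A (ys ! i)])" for i
  have leib: "dif A y = (\<Sum>i<k. asc A (kk i) (T i))"
    unfolding h(6) kk_def T_def using dg_leib[OF dA h(1) h(2) hCA] .
  have Ti: "T i \<in> G L (m + e) \<and> gg (T i) = act B nu ((map gp ys)[i := dif B (gp (ys ! i))])" if i: "i < k" for i
  proof -
    have dy: "dif A (ys ! i) \<in> G L (ds ! i + e)" using G_mono[OF _ dif_V[OF yV[OF i] dsL[OF i]]] by simp
    have hu: "homog (G L) (ds[i := ds ! i + e]) (ys[i := dif A (ys ! i)])"
      by (rule homog_upd2[OF hGL]) (use i h(2) dy in auto)
    have H: "T i \<in> G L (sum_list (ds[i := ds ! i + e])) \<and> gg (T i) = act B nu (map gg (ys[i := dif A (ys ! i)]))"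
      unfolding T_def by (rule hom_G[OF h(1)]) (use h(2) hu in auto)
    have s: "sum_list (ds[i := ds ! i + e]) = m + e" using sum_list_upd[of i ds] i ld h(5) by simp
    have mg: "map gg ys = map gp ys"
    proof (rule nth_equalityI)
      show "length (map gg ys) = length (map gp ys)" by simp
      fix j assume "j < length (map gg ys)"
      then have j: "j < k" using h(2) by simp
      show "map gg ys ! j = map gp ys ! j" using gg_V[OF yV[OF j] dsL[OF j]] j h(2) by simp
    qed
    have "map gg (ys[i := dif A (ys ! i)]) = (map gp ys)[i := dif B (gp (ys ! i))]"
      by (simp only: map_update gg_dif_V[OF yV[OF i] dsL[OF i]] mg)
    then show ?thesis using H s by simp
  qed
  have inG: "dif A y \<in> G L (m + e)" unfolding leib
    by (rule sum_in_sub[OF G_sub]) (use Ti in \<open>auto intro: lsub_sc[OF G_sub]\<close>)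
  have "gg (dif A y) = (\<Sum>i<k. asc B (kk i) (gg (T i)))" unfolding leib
    by (rule lin_sum[OF G_sub]) (use Ti gg_add gg_sc in auto)
  also have "\<dots> = (\<Sum>i<k. asc B (kk i) (act B nu ((map gp ys)[i := dif B (map gp ys ! i)])))"
    using Ti h(2) by (auto intro!: sum.cong)
  also have "\<dots> = dif B (act B nu (map gp ys))"
  proof -
    have hB: "homog (Car B) ds (map gp ys)" by (rule homog_map[OF h(3)]) (use homog_nth[OF h(3)] gp_car in blast)
    show ?thesis unfolding kk_def using dg_leib[OF dB h(1) _ hB] h(2) by simp
  qed
  also have "\<dots> = dif B (gg y)" using gg_pure[OF h(1) h(2) h(3) h(4)] h(6) by simp
  finally show ?thesis using inG by simp
qed

lemma dif_G: "x \<in> G L m \<Longrightarrow> dif A x \<in> G L (m + e) \<and> gg (dif A x) = dif B (gg x)"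
  unfolding gen_car_eq[of P A V L m]
proof (induction rule: lspan_induct)
  case 1 then show ?case using difA0 difB0 gg0 lsub_0[OF G_sub] by simp
next
  case (2 c y z)
  have yG: "y \<in> G L m" using 2(1) by (simp add: pure_G)
  have zG: "z \<in> G L m" using 2(2) unfolding gen_car_eq .
  have Qy: "dif A y \<in> G L (m + e) \<and> gg (dif A y) = dif B (gg y)" using dif_pure 2(1) by simp
  have Qz: "dif A z \<in> G L (m + e) \<and> gg (dif A z) = dif B (gg z)" using 2(3) .
  have yA: "y \<in> Car A m" and zA: "z \<in> Car A m" using G_car yG zG by auto
  have cyA: "asc A c y \<in> Car A m" using lsub_sc[OF subA yA] .
  have d1: "dif A (asc A c y + z) = asc A c (dif A y) + dif A z"
    using dg_add[OF dA cyA zA] dg_sc[OF dA yA] by simp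
  have inG: "dif A (asc A c y + z) \<in> G L (m + e)" unfolding d1 using Qy Qz
    by (intro lsub_add[OF G_sub] lsub_sc[OF G_sub]) auto
  have gyB: "gg y \<in> Car B m" and gzB: "gg z \<in> Car B m" using gg_car yG zG by auto
  have cgyB: "asc B c (gg y) \<in> Car B m" using lsub_sc[OF subB gyB] .
  have "gg (dif A (asc A c y + z)) = asc B c (gg (dif A y)) + gg (dif A z)"
    unfolding d1 using gg_add[OF lsub_sc[OF G_sub] ] gg_sc Qy Qz by (metis lsub_sc[OF G_sub] gg_add gg_sc)
  also have "\<dots> = dif B (asc B c (gg y) + gg z)"
    using Qy Qz dg_add[OF dB cgyB gzB] dg_sc[OF dB gyB] by simp
  also have "\<dots> = dif B (gg (asc A c y + z))"
    using gg_add[OF lsub_sc[OF G_sub yG] zG] gg_sc[OF yG] by simp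
  finally show ?case using inG by simp
qed

lemma ext_main: "\<exists>g. dg_hom P (subalg P A V L) B g \<and> (\<forall>m. \<forall>x\<in>Car (subalg P A V (L - 1)) m. g x = f x)"
proof (rule exI[of _ gg], intro conjI)
  show "dg_hom P (subalg P A V L) B gg"
    unfolding dg_hom_def sub_simps
    using gg_car gg_add gg_sc dif_G hom_G by blast
  show "\<forall>m. \<forall>x\<in>Car (subalg P A V (L - 1)) m. gg x = f x" using gg_f by simp
qed

end


lemma low_cochain:
  fixes P :: "('k::field, 'o::ab_group_add) operad" and A :: "('k, 'a::ab_group_add, 'o) dgpalg"
  assumes op: "is_operad P" and A: "is_palg P A" and qf: "quasi_free P A V" and oc: "one_connected_cochain P A"
    and x: "x \<in> V d" and nz: "x \<noteq> 0"
  shows "2 \<le> d"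
proof (rule ccontr)
  assume "\<not> 2 \<le> d"
  then consider "d < 0" | "d = 0" | "d = 1" by linarith
  then show False
  proof cases
    case 1 then show False using oc qf_VC[OF qf x] nz unfolding one_connected_cochain_def by auto
  next
    case 2 then show False using V0_zero[OF op A qf _ ] oc x nz unfolding one_connected_cochain_def by auto
  next
    case 3 then show False using oc qf_VC[OF qf x] nz unfolding one_connected_cochain_def by auto
  qed
qed

lemma low_chain:
  fixes P :: "('k::field, 'o::ab_group_add) operad" and A :: "('k, 'a::ab_group_add, 'o) dgpalg"
  assumes op: "is_operad P" and A: "is_palg P A" and qf: "quasi_free P A V" and oc: "one_connected_chain P A"
    and x: "x \<in> V d" and nz: "x \<noteq> 0"
  shows "1 \<le> d"
proof (rule ccontr)
  assume "\<not> 1 \<le> d"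
  then consider "d < 0" | "d = 0" by linarith
  then show False
  proof cases
    case 1 then show False using oc qf_VC[OF qf x] nz unfolding one_connected_chain_def by auto
  next
    case 2 then show False using V0_zero[OF op A qf _ ] oc x nz unfolding one_connected_chain_def by auto
  qed
qed

theorem mainTheorem4:
  fixes P :: "('k::field_char_0, 'o::ab_group_add) operad"
  assumes "std_operad P"
  shows
   "(\<forall>(A :: ('k, 'a::ab_group_add, 'o) dgpalg) V (B :: ('k, 'b::ab_group_add, 'o) dgpalg) n f.
       cochain_palg P A \<and> quasi_free P A V \<and> minimal P 1 A V \<and> one_connected_cochain P A \<and>
       cochain_palg P B \<and> homology_le 1 B n \<and>
       dg_hom P (subalg P A V (n - 1)) B f
       \<longrightarrow> (\<exists>g. dg_hom P (subalg P A V n) B g \<and>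
               (\<forall>m. \<forall>x\<in>Car (subalg P A V (n - 1)) m. g x = f x))) \<and>
    (\<forall>(A :: ('k, 'a::ab_group_add, 'o) dgpalg) V (B :: ('k, 'b::ab_group_add, 'o) dgpalg) n f.
       chain_palg P A \<and> quasi_free P A V \<and> minimal P (-1) A V \<and> one_connected_chain P A \<and>
       chain_palg P B \<and> homology_le (-1) B n \<and>
       dg_hom P (subalg P A V (n + 1)) B f
       \<longrightarrow> (\<exists>g. dg_hom P (subalg P A V (n + 2)) B g \<and>
               (\<forall>m. \<forall>x\<in>Car (subalg P A V (n + 1)) m. g x = f x)))"
proof (intro conjI allI impI)
  have op: "is_operad P" using assms unfolding std_operad_def by blast
  fix A :: "('k, 'a::ab_group_add, 'o) dgpalg" and V and B :: "('k, 'b::ab_group_add, 'o) dgpalg" and n f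
  {
    assume h: "cochain_palg P A \<and> quasi_free P A V \<and> minimal P 1 A V \<and> one_connected_cochain P A \<and>
       cochain_palg P B \<and> homology_le 1 B n \<and> dg_hom P (subalg P A V (n - 1)) B f"
    have dA: "is_dgpalg P 1 A" and dB: "is_dgpalg P 1 B" using h unfolding cochain_palg_def by auto
    have qfA: "quasi_free P A V" and ocA: "one_connected_cochain P A" using h by auto
    interpret X: extctx P A V B 1 2 n n f
    proof
      show "is_operad P" by (rule op)
      show "is_dgpalg P 1 A" by (rule dA)
      show "is_dgpalg P 1 B" by (rule dB)
      show "quasi_free P A V" using h by blast
      show "minimal P 1 A V" using h by blast
      show "2 \<le> d" if "x \<in> V d" "x \<noteq> 0" for d x
        using low_cochain[OF op dg_palg[OF dA] qfA ocA that] .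
      show "(0::int) \<le> 2" by simp
      show "(1::int) + 1 \<le> 2" by simp
      show "homology_le 1 B n" using h by blast
      show "n < n + 1" by simp
      show "dg_hom P (subalg P A V (n - 1)) B f" using h by blast
    qed
    show "\<exists>g. dg_hom P (subalg P A V n) B g \<and> (\<forall>m. \<forall>x\<in>Car (subalg P A V (n - 1)) m. g x = f x)"
      by (rule X.ext_main)
  }
  {
    assume h: "chain_palg P A \<and> quasi_free P A V \<and> minimal P (-1) A V \<and> one_connected_chain P A \<and>
       chain_palg P B \<and> homology_le (-1) B n \<and> dg_hom P (subalg P A V (n + 1)) B f"
    have dA: "is_dgpalg P (-1) A" and dB: "is_dgpalg P (-1) B" using h unfolding chain_palg_def by auto
    have qfA: "quasi_free P A V" and ocA: "one_connected_chain P A" using h by auto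
    have nn: "n + 2 - 1 = n + 1" by simp
    interpret X: extctx P A V B "-1" 1 "n + 2" n f
    proof
      show "is_operad P" by (rule op)
      show "is_dgpalg P (-1) A" by (rule dA)
      show "is_dgpalg P (-1) B" by (rule dB)
      show "quasi_free P A V" using h by blast
      show "minimal P (-1) A V" using h by blast
      show "1 \<le> d" if "x \<in> V d" "x \<noteq> 0" for d x
        using low_chain[OF op dg_palg[OF dA] qfA ocA that] .
      show "(0::int) \<le> 1" by simp
      show "(-1::int) + 1 \<le> 1" by simp
      show "homology_le (-1) B n" using h by blast
      show "n < n + 2 + -1" by simp
      show "dg_hom P (subalg P A V (n + 2 - 1)) B f" unfolding nn using h by blast
    qed
    show "\<exists>g. dg_hom P (subalg P A V (n + 2)) B g \<and> (\<forall>m. \<forall>x\<in>Car (subalg P A V (n + 1)) m. g x = f x)"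
      using X.ext_main unfolding nn .
  }
qed

end
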